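(* Let $A$ be a Lie conformal algebra and $M$ an $A$-module with a commutative associative product such that $\partial^M$ and all $a_\lambda$ are derivations of it. For every $\xi\in\tilde\Gamma_h(A,M)$ we have $[\partial,\iota_\xi]=\partial\circ\iota_\xi-\iota_\xi\circ\partial=\iota_{\partial\xi}$ as operators on $\tilde\Gamma^\bullet(A,M)$. In particular, if $\xi\in\Gamma_h$ then $\iota_\xi$ commutes with $\partial$ and induces a well-defined contraction operator $\iota_\xi:\Gamma^k\to\Gamma^{k-h}$.
   Context: $\mathbb F$ field of characteristic 0. $\tilde\Gamma^k(A,M)$: $\mathbb F$-linear $\tilde\gamma:A^{\otimes k}\to\mathbb F[\lambda_1..\lambda_k]\otimes M$ with $\tilde\gamma(\dots,\partial a_i,\dots)=-\lambda_i\tilde\gamma$ and skew-symmetry under simultaneous permutations of $a_i,\lambda_i$; $\partial$ acts by $(\partial\tilde\gamma)_{\lambda_1..\lambda_k}=(\partial^M+\lambda_1+\dots+\lambda_k)\tilde\gamma_{\lambda_1..\lambda_k}$; $\Gamma^k=\tilde\Gamma^k/\partial\tilde\Gamma^k$. $\tilde\Gamma_h(A,M)$: quotient of $A^{\otimes h}\otimes\mathrm{Hom}_{\mathbb F}(\mathbb F[\lambda_1..\lambda_h],M)$ by (C1) $\cdots\partial a_i\cdots\otimes\phi=-\cdots\otimes\lambda_i^*\phi$, $(\lambda_i^*\phi)(f)=\phi(\lambda_if)$, and (C2) skew-symmetry $a_{\sigma(1)}\otimes..\otimes a_{\sigma(h)}\otimes\sigma^*\phi=\mathrm{sign}(\sigma)a_1\otimes..\otimes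 a_h\otimes\phi$, $(\sigma^*\phi)(f)=\phi(f(\lambda_{\sigma(1)},..,\lambda_{\sigma(h)}))$. $\partial$ acts on $\tilde\Gamma_h$ by $\partial(a_1\otimes\cdots\otimes a_h\otimes\phi)=a_1\otimes\cdots\otimes a_h\otimes(-\lambda_1^*-\dots-\lambda_h^*+\partial)\phi$ where $(\partial\phi)(f)=\partial^M(\phi(f))$; $\Gamma_h=\{\xi\in\tilde\Gamma_h:\partial\xi=0\}$. Contraction: for $\xi$ represented by $a_1\otimes\cdots\otimes a_h\otimes\phi$, $(\iota_\xi\tilde\gamma)_{\lambda_{h+1}..\lambda_k}(a_{h+1}..a_k)=\phi^\mu(\tilde\gamma_{\lambda_1..\lambda_k}(a_1..a_k))$ with $\phi^\mu(f\otimes m)=\phi(f)m$, coefficientwise in $\lambda_{h+1},..,\lambda_k$; $\iota_\xi=0$ on $\tilde\Gamma^k$, $k<h$. *)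

theory Defs
  imports Complex_Main "HOL-Combinatorics.Permutations"
begin

text \<open>A polynomial in one variable lambda with coefficients in V (an element of
  F[lambda] (x) V) is represented by its coefficient function nat => V
  (coefficient of lambda^n), which must have finite support.
  A polynomial in lambda_1..lambda_k with coefficients in V is represented by
  its coefficient function on exponent vectors (nat lists of length k).\<close>

(* coefficient of lambda^n in lambda * p *)
definition shift :: "(nat \<Rightarrow> 'v::zero) \<Rightarrow> nat \<Rightarrow> 'v" where
  "shift p n = (case n of 0 \<Rightarrow> 0 | Suc m \<Rightarrow> p m)"

text \<open>Lie conformal algebra (A, dA, lambda-bracket br): br a b n is the
  coefficient of lambda^n in [a_lambda b].\<close>
definition lie_conformal ::
  "('f::field_char_0 \<Rightarrow> 'a::ab_group_add \<Rightarrow> 'a) \<Rightarrow> ('a \<Rightarrow> 'a) \<Rightarrow> ('a \<Rightarrow> 'a \<Rightarrow> nat \<Rightarrow> 'a) \<Rightarrow> bool"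
where
  "lie_conformal sA dA br \<longleftrightarrow>
     vector_space sA \<and> Vector_Spaces.linear sA sA dA \<and>
     (\<forall>a b. finite {n. br a b n \<noteq> 0}) \<and>
     (\<forall>a a' b n. br (a + a') b n = br a b n + br a' b n) \<and>
     (\<forall>a b b' n. br a (b + b') n = br a b n + br a b' n) \<and>
     (\<forall>c a b n. br (sA c a) b n = sA c (br a b n)) \<and>
     (\<forall>c a b n. br a (sA c b) n = sA c (br a b n)) \<and>
     \<comment> \<open>sesquilinearity: [da_lambda b] = -lambda[a_lambda b], [a_lambda db] = (d+lambda)[a_lambda b]\<close>
     (\<forall>a b n. br (dA a) b n = - shift (br a b) n) \<and>
     (\<forall>a b n. br a (dA b) n = dA (br a b n) + shift (br a b) n) \<and>
     \<comment> \<open>skew-symmetry: [b_lambda a] = - [a_{-lambda-d} b]\<close>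
     (\<forall>a b i. br b a i =
        - (\<Sum>j\<in>{j. br a b j \<noteq> 0}.
             sA ((-1) ^ j * of_nat (j choose i)) ((dA ^^ (j - i)) (br a b j)))) \<and>
     \<comment> \<open>Jacobi identity, coefficient of lambda^p mu^q in
         [a_lambda [b_mu c]] = [[a_lambda b]_{lambda+mu} c] + [b_mu [a_lambda c]]\<close>
     (\<forall>a b c p q. br a (br b c q) p =
        (\<Sum>j\<le>p. sA (of_nat ((p - j + q) choose q)) (br (br a b j) c (p - j + q)))
        + br b (br a c p) q)"

definition conformal_module ::
  "('f::field_char_0 \<Rightarrow> 'a::ab_group_add \<Rightarrow> 'a) \<Rightarrow> ('a \<Rightarrow> 'a) \<Rightarrow> ('a \<Rightarrow> 'a \<Rightarrow> nat \<Rightarrow> 'a) \<Rightarrow>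
   ('f \<Rightarrow> 'm::ab_group_add \<Rightarrow> 'm) \<Rightarrow> ('m \<Rightarrow> 'm) \<Rightarrow> ('a \<Rightarrow> 'm \<Rightarrow> nat \<Rightarrow> 'm) \<Rightarrow> bool"
where
  "conformal_module sA dA br sM dM act \<longleftrightarrow>
     lie_conformal sA dA br \<and>
     vector_space sM \<and> Vector_Spaces.linear sM sM dM \<and>
     (\<forall>a m. finite {n. act a m n \<noteq> 0}) \<and>
     (\<forall>a a' m n. act (a + a') m n = act a m n + act a' m n) \<and>
     (\<forall>a m m' n. act a (m + m') n = act a m n + act a m' n) \<and>
     (\<forall>c a m n. act (sA c a) m n = sM c (act a m n)) \<and>
     (\<forall>c a m n. act a (sM c m) n = sM c (act a m n)) \<and>
     (\<forall>a m n. act (dA a) m n = - shift (act a m) n) \<and>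
     (\<forall>a m n. act a (dM m) n = dM (act a m n) + shift (act a m) n) \<and>
     \<comment> \<open>[a_lambda b]_{lambda+mu} m = a_lambda (b_mu m) - b_mu (a_lambda m), coefficient of lambda^p mu^q\<close>
     (\<forall>a b m p q.
        (\<Sum>j\<le>p. sM (of_nat ((p - j + q) choose q)) (act (br a b j) m (p - j + q)))
        = act a (act b m q) p - act b (act a m p) q)"

definition derivation_product ::
  "('f::field_char_0 \<Rightarrow> 'm::ab_group_add \<Rightarrow> 'm) \<Rightarrow> ('m \<Rightarrow> 'm) \<Rightarrow> ('a \<Rightarrow> 'm \<Rightarrow> nat \<Rightarrow> 'm) \<Rightarrow>
   ('m \<Rightarrow> 'm \<Rightarrow> 'm) \<Rightarrow> bool"
where
  "derivation_product sM dM act mul \<longleftrightarrow>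
     (\<forall>x x' y. mul (x + x') y = mul x y + mul x' y) \<and>
     (\<forall>c x y. mul (sM c x) y = sM c (mul x y)) \<and>
     (\<forall>x y. mul x y = mul y x) \<and>
     (\<forall>x y z. mul (mul x y) z = mul x (mul y z)) \<and>
     (\<forall>x y. dM (mul x y) = mul (dM x) y + mul x (dM y)) \<and>
     (\<forall>a x y n. act a (mul x y) n = mul (act a x n) y + mul x (act a y n))"

text \<open>A k-cochain g: g as e is the coefficient of lambda^e (e an exponent vector
  of length k) in g_{lambda_1..lambda_k}(a_1,..,a_k), as = [a_1,..,a_k].
  Values on inputs of the wrong length are normalised to 0.\<close>

definition cochain ::
  "('f::field_char_0 \<Rightarrow> 'a::ab_group_add \<Rightarrow> 'a) \<Rightarrow> ('a \<Rightarrow> 'a) \<Rightarrow> ('f \<Rightarrow> 'm::ab_group_add \<Rightarrow> 'm) \<Rightarrow>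
   nat \<Rightarrow> ('a list \<Rightarrow> nat list \<Rightarrow> 'm) \<Rightarrow> bool"
where
  "cochain sA dA sM k g \<longleftrightarrow>
     (\<forall>as e. length as \<noteq> k \<or> length e \<noteq> k \<longrightarrow> g as e = 0) \<and>
     (\<forall>as. finite {e. g as e \<noteq> 0}) \<and>
     (\<forall>as i x y e. length as = k \<longrightarrow> i < k \<longrightarrow>
        g (as[i := x + y]) e = g (as[i := x]) e + g (as[i := y]) e) \<and>
     (\<forall>as i c x e. length as = k \<longrightarrow> i < k \<longrightarrow>
        g (as[i := sA c x]) e = sM c (g (as[i := x]) e)) \<and>
     \<comment> \<open>g(.., d a_i, ..) = - lambda_i g(..)\<close>
     (\<forall>as i e. length as = k \<longrightarrow> length e = k \<longrightarrow> i < k \<longrightarrow>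
        g (as[i := dA (as ! i)]) e =
          - (if e ! i = 0 then 0 else g as (e[i := e ! i - 1]))) \<and>
     \<comment> \<open>skew-symmetry under simultaneous permutation of the a_i and lambda_i\<close>
     (\<forall>as e \<sigma>. length as = k \<longrightarrow> length e = k \<longrightarrow> \<sigma> permutes {..<k} \<longrightarrow>
        g (map (\<lambda>j. as ! \<sigma> j) [0..<k]) (map (\<lambda>j. e ! \<sigma> j) [0..<k])
          = sM (of_int (sign \<sigma>)) (g as e))"

text \<open>(dg)_{lambda} = (dM + lambda_1 + .. + lambda_k) g_{lambda}\<close>
definition dcoch ::
  "('m::ab_group_add \<Rightarrow> 'm) \<Rightarrow> nat \<Rightarrow> ('a list \<Rightarrow> nat list \<Rightarrow> 'm) \<Rightarrow> 'a list \<Rightarrow> nat list \<Rightarrow> 'm"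
where
  "dcoch dM k g = (\<lambda>as e. if length as = k \<and> length e = k then
      dM (g as e) + (\<Sum>i<k. if e ! i = 0 then 0 else g as (e[i := e ! i - 1]))
    else 0)"

text \<open>A generator a_1 (x) .. (x) a_h (x) phi of A^{(x)h} (x) Hom(F[lambda_1..lambda_h], M)
  is a pair (as, phi), where phi is given by its values on the monomials
  lambda^e (e of length h; phi normalised to 0 on other lists).  Elements of
  the free F-vector space on generators are finitely supported functions
  xi :: generator => F; \<open>\<tilde>\<Gamma>\<^sub>h\<close> is its quotient by the subspace chain_null h
  spanned by the multilinearity relations and (C1), (C2).\<close>

definition valid_gen :: "nat \<Rightarrow> 'a list \<times> (nat list \<Rightarrow> 'm::zero) \<Rightarrow> bool" where
  "valid_gen h p \<longleftrightarrow> length (fst p) = h \<and> (\<forall>e. length e \<noteq> h \<longrightarrow> snd p e = 0)"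

definition chain_rep :: "nat \<Rightarrow> ('a list \<times> (nat list \<Rightarrow> 'm::zero) \<Rightarrow> 'f::zero) \<Rightarrow> bool" where
  "chain_rep h \<xi> \<longleftrightarrow> finite {p. \<xi> p \<noteq> 0} \<and> (\<forall>p. \<xi> p \<noteq> 0 \<longrightarrow> valid_gen h p)"

definition delta :: "'g \<Rightarrow> 'g \<Rightarrow> 'f::{zero,one}" where
  "delta g = (\<lambda>p. if p = g then 1 else 0)"

(* (lambda_i^* phi)(f) = phi(lambda_i f) *)
definition lam_star :: "nat \<Rightarrow> nat \<Rightarrow> (nat list \<Rightarrow> 'm::zero) \<Rightarrow> nat list \<Rightarrow> 'm" where
  "lam_star h i \<phi> = (\<lambda>e. if length e = h then \<phi> (e[i := e ! i + 1]) else 0)"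

(* (sigma^* phi)(f) = phi(f(lambda_sigma(1),..,lambda_sigma(h))) *)
definition perm_star :: "nat \<Rightarrow> (nat \<Rightarrow> nat) \<Rightarrow> (nat list \<Rightarrow> 'm::zero) \<Rightarrow> nat list \<Rightarrow> 'm" where
  "perm_star h \<sigma> \<phi> = (\<lambda>e. if length e = h then \<phi> (map (\<lambda>j. e ! inv \<sigma> j) [0..<h]) else 0)"

inductive_set chain_null ::
  "('f::field_char_0 \<Rightarrow> 'a::ab_group_add \<Rightarrow> 'a) \<Rightarrow> ('a \<Rightarrow> 'a) \<Rightarrow> ('f \<Rightarrow> 'm::ab_group_add \<Rightarrow> 'm) \<Rightarrow>
   nat \<Rightarrow> ('a list \<times> (nat list \<Rightarrow> 'm) \<Rightarrow> 'f) set"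
  for sA dA sM h
where
  zero: "(\<lambda>p. 0) \<in> chain_null sA dA sM h"
| add: "\<xi> \<in> chain_null sA dA sM h \<Longrightarrow> \<eta> \<in> chain_null sA dA sM h \<Longrightarrow>
     (\<lambda>p. \<xi> p + \<eta> p) \<in> chain_null sA dA sM h"
| scale: "\<xi> \<in> chain_null sA dA sM h \<Longrightarrow> (\<lambda>p. c * \<xi> p) \<in> chain_null sA dA sM h"
| lin_add_a: "valid_gen h (as, \<phi>) \<Longrightarrow> i < h \<Longrightarrow>
     (\<lambda>p. delta (as[i := x + y], \<phi>) p - delta (as[i := x], \<phi>) p - delta (as[i := y], \<phi>) p)
       \<in> chain_null sA dA sM h"
| lin_scale_a: "valid_gen h (as, \<phi>) \<Longrightarrow> i < h \<Longrightarrow>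
     (\<lambda>p. delta (as[i := sA c x], \<phi>) p - c * delta (as[i := x], \<phi>) p) \<in> chain_null sA dA sM h"
| lin_add_phi: "valid_gen h (as, \<phi>) \<Longrightarrow> valid_gen h (as, \<psi>) \<Longrightarrow>
     (\<lambda>p. delta (as, \<lambda>e. \<phi> e + \<psi> e) p - delta (as, \<phi>) p - delta (as, \<psi>) p)
       \<in> chain_null sA dA sM h"
| lin_scale_phi: "valid_gen h (as, \<phi>) \<Longrightarrow>
     (\<lambda>p. delta (as, \<lambda>e. sM c (\<phi> e)) p - c * delta (as, \<phi>) p) \<in> chain_null sA dA sM h"
| C1: "valid_gen h (as, \<phi>) \<Longrightarrow> i < h \<Longrightarrow>
     (\<lambda>p. delta (as[i := dA (as ! i)], \<phi>) p + delta (as, lam_star h i \<phi>) p) \<in> chain_null sA dA sM h"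
| C2: "valid_gen h (as, \<phi>) \<Longrightarrow> \<sigma> permutes {..<h} \<Longrightarrow>
     (\<lambda>p. delta (map (\<lambda>j. as ! \<sigma> j) [0..<h], perm_star h \<sigma> \<phi>) p - of_int (sign \<sigma>) * delta (as, \<phi>) p)
       \<in> chain_null sA dA sM h"

text \<open>d(a_1 (x) .. (x) a_h (x) phi) = a_1 (x) .. (x) a_h (x) (-lambda_1^* - .. - lambda_h^* + d) phi,
  extended linearly to the free vector space.\<close>
definition dgen_phi :: "('m::ab_group_add \<Rightarrow> 'm) \<Rightarrow> nat \<Rightarrow> (nat list \<Rightarrow> 'm) \<Rightarrow> nat list \<Rightarrow> 'm" where
  "dgen_phi dM h \<phi> = (\<lambda>e. if length e = h then
      dM (\<phi> e) - (\<Sum>i<h. lam_star h i \<phi> e) else 0)"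

definition dchain ::
  "('m::ab_group_add \<Rightarrow> 'm) \<Rightarrow> nat \<Rightarrow> ('a list \<times> (nat list \<Rightarrow> 'm) \<Rightarrow> 'f::comm_ring_1)
   \<Rightarrow> 'a list \<times> (nat list \<Rightarrow> 'm) \<Rightarrow> 'f"
where
  "dchain dM h \<xi> = (\<lambda>(as, \<psi>).
     \<Sum>p\<in>{p. \<xi> p \<noteq> 0 \<and> fst p = as \<and> dgen_phi dM h (snd p) = \<psi>}. \<xi> p)"

text \<open>For a generator (as, phi) and a k-cochain g (k \<ge> h):
  (iota g)_{lambda_{h+1}..lambda_k}(bs) = phi^mu(g_{lambda_1..lambda_k}(as @ bs)),
  with phi^mu(f (x) m) = mul (phi f) m, coefficientwise in lambda_{h+1}..lambda_k.\<close>
definition contr_gen ::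
  "('m::ab_group_add \<Rightarrow> 'm \<Rightarrow> 'm) \<Rightarrow> nat \<Rightarrow> 'a list \<Rightarrow> (nat list \<Rightarrow> 'm) \<Rightarrow>
   ('a list \<Rightarrow> nat list \<Rightarrow> 'm) \<Rightarrow> 'a list \<Rightarrow> nat list \<Rightarrow> 'm"
where
  "contr_gen mul h as \<phi> g bs e' =
     (\<Sum>e\<in>{e. length e = h \<and> g (as @ bs) (e @ e') \<noteq> 0}. mul (\<phi> e) (g (as @ bs) (e @ e')))"

definition iota ::
  "('f::field_char_0 \<Rightarrow> 'm::ab_group_add \<Rightarrow> 'm) \<Rightarrow> ('m \<Rightarrow> 'm \<Rightarrow> 'm) \<Rightarrow> nat \<Rightarrow> nat \<Rightarrow>
   ('a list \<times> (nat list \<Rightarrow> 'm) \<Rightarrow> 'f) \<Rightarrow> ('a list \<Rightarrow> nat list \<Rightarrow> 'm) \<Rightarrow> 'a list \<Rightarrow> nat list \<Rightarrow> 'm"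
where
  "iota sM mul h k \<xi> g = (\<lambda>bs e'.
     if h \<le> k \<and> length bs = k - h \<and> length e' = k - h then
       (\<Sum>p\<in>{p. \<xi> p \<noteq> 0}. sM (\<xi> p) (contr_gen mul h (fst p) (snd p) g bs e'))
     else 0)"

end

theory Submission
  imports Defs
begin


definition fsum :: "nat \<Rightarrow> (nat list \<Rightarrow> 'm::ab_group_add) \<Rightarrow> 'm" where
  "fsum n F = sum F {e. length e = n \<and> F e \<noteq> 0}"

definition fin :: "nat \<Rightarrow> (nat list \<Rightarrow> 'm::ab_group_add) \<Rightarrow> bool" where
  "fin n F \<longleftrightarrow> finite {e. length e = n \<and> F e \<noteq> 0}"

definition addh :: "('m::ab_group_add \<Rightarrow> 'n::ab_group_add) \<Rightarrow> bool" where
  "addh f \<longleftrightarrow> (\<forall>x y. f (x + y) = f x + f y)"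

lemma addh_zero: "addh f \<Longrightarrow> f 0 = 0"
  unfolding addh_def by (metis add_cancel_right_right add_0)

lemma addh_neg: "addh f \<Longrightarrow> f (- x) = - f x"
  using addh_zero[of f] unfolding addh_def by (metis add.right_inverse eq_neg_iff_add_eq_0)

lemma addh_diff: "addh f \<Longrightarrow> f (x - y) = f x - f y"
  using addh_neg[of f] unfolding addh_def by (metis diff_conv_add_uminus)

lemma addh_sum: "addh f \<Longrightarrow> f (sum g A) = (\<Sum>a\<in>A. f (g a))"
  using sum_comp_morphism[of f g A] addh_zero[of f] unfolding addh_def by (simp add: o_def)

lemma fsum_superset:
  assumes "finite A" "{e. length e = n \<and> F e \<noteq> 0} \<subseteq> A" "A \<subseteq> {e. length e = n}"
  shows "fsum n F = sum F A"
  unfolding fsum_def using assms by (intro sum.mono_neutral_left) auto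

lemma fin_subset: "fin n F \<Longrightarrow> (\<And>e. length e = n \<Longrightarrow> G e \<noteq> 0 \<Longrightarrow> F e \<noteq> 0) \<Longrightarrow> fin n G"
  unfolding fin_def by (erule finite_subset[rotated]) auto

lemma fin_image: "finite B \<Longrightarrow> (\<And>e. length e = n \<Longrightarrow> F e \<noteq> 0 \<Longrightarrow> e \<in> f ` B) \<Longrightarrow> fin n F"
  unfolding fin_def by (rule finite_subset[of _ "f ` B"]) auto

lemma fin_add: "fin n F \<Longrightarrow> fin n G \<Longrightarrow> fin n (\<lambda>e. F e + G e)"
  unfolding fin_def by (rule finite_subset[of _ "{e. length e = n \<and> F e \<noteq> 0} \<union> {e. length e = n \<and> G e \<noteq> 0}"]) auto

lemma fin_hom: "fin n F \<Longrightarrow> addh f \<Longrightarrow> fin n (\<lambda>e. f (F e))"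
  by (erule fin_subset) (auto simp: addh_zero)

lemma fin_neg: "fin n F \<Longrightarrow> fin n (\<lambda>e. - F e)"
  by (erule fin_subset) auto

lemma fin_zero: "fin n (\<lambda>e. 0)"
  unfolding fin_def by simp

lemma fin_sum: "finite I \<Longrightarrow> (\<And>i. i \<in> I \<Longrightarrow> fin n (F i)) \<Longrightarrow> fin n (\<lambda>e. \<Sum>i\<in>I. F i e)"
  by (induction I rule: finite_induct) (auto intro: fin_add fin_zero)

lemma fsum_add:
  assumes "fin n F" "fin n G"
  shows "fsum n (\<lambda>e. F e + G e) = fsum n F + fsum n G"
proof -
  let ?A = "{e. length e = n \<and> F e \<noteq> 0} \<union> {e. length e = n \<and> G e \<noteq> 0}"
  have fA: "finite ?A" using assms unfolding fin_def by auto
  have "fsum n (\<lambda>e. F e + G e) = sum (\<lambda>e. F e + G e) ?A"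
    by (rule fsum_superset[OF fA]) auto
  moreover have "fsum n F = sum F ?A" by (rule fsum_superset[OF fA]) auto
  moreover have "fsum n G = sum G ?A" by (rule fsum_superset[OF fA]) auto
  ultimately show ?thesis by (simp add: sum.distrib)
qed

lemma fsum_hom:
  assumes "fin n F" "addh f"
  shows "fsum n (\<lambda>e. f (F e)) = f (fsum n F)"
proof -
  let ?A = "{e. length e = n \<and> F e \<noteq> 0}"
  have fA: "finite ?A" using assms unfolding fin_def by auto
  have "fsum n (\<lambda>e. f (F e)) = sum (\<lambda>e. f (F e)) ?A"
    by (rule fsum_superset[OF fA]) (auto simp: addh_zero[OF assms(2)])
  moreover have "fsum n F = sum F ?A" by (rule fsum_superset[OF fA]) auto
  ultimately show ?thesis by (simp add: addh_sum[OF assms(2)])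
qed

lemma addh_neg_fun: "addh (\<lambda>x::'m::ab_group_add. - x)"
  unfolding addh_def by simp

lemma fsum_neg: "fin n F \<Longrightarrow> fsum n (\<lambda>e. - F e) = - fsum n F"
  using fsum_hom[OF _ addh_neg_fun] by blast

lemma fsum_diff: "fin n F \<Longrightarrow> fin n G \<Longrightarrow> fsum n (\<lambda>e. F e - G e) = fsum n F - fsum n G"
  using fsum_add[of n F "\<lambda>e. - G e"] fsum_neg[of n G] fin_neg[of n G] by simp

lemma fsum_zero: "fsum n (\<lambda>e. 0) = 0"
  unfolding fsum_def by simp

lemma fsum_sum: "finite I \<Longrightarrow> (\<And>i. i \<in> I \<Longrightarrow> fin n (F i)) \<Longrightarrow>
   fsum n (\<lambda>e. \<Sum>i\<in>I. F i e) = (\<Sum>i\<in>I. fsum n (F i))"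
proof (induction I rule: finite_induct)
  case empty then show ?case by (simp add: fsum_zero)
next
  case (insert x F')
  then show ?case by (simp add: fsum_add fin_sum)
qed

lemma fsum_cong: "(\<And>e. length e = n \<Longrightarrow> F e = G e) \<Longrightarrow> fsum n F = fsum n G"
  unfolding fsum_def
  by (rule sum.cong) auto

lemma fsum_reindex:
  assumes inj: "inj_on T {e. length e = n}" and img: "T ` {e. length e = n} \<subseteq> {e. length e = n}"
    and van: "\<And>e. length e = n \<Longrightarrow> e \<notin> T ` {e. length e = n} \<Longrightarrow> F e = 0"
  shows "fsum n (\<lambda>e. F (T e)) = fsum n F"
proof -
  let ?A = "{e. length e = n \<and> F (T e) \<noteq> 0}"
  have im: "T ` ?A = {e. length e = n \<and> F e \<noteq> 0}"
  proof
    show "T ` ?A \<subseteq> {e. length e = n \<and> F e \<noteq> 0}" using img by auto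
    show "{e. length e = n \<and> F e \<noteq> 0} \<subseteq> T ` ?A"
    proof
      fix e assume e: "e \<in> {e. length e = n \<and> F e \<noteq> 0}"
      then obtain f where "length f = n" "e = T f" using van by blast
      with e show "e \<in> T ` ?A" by auto
    qed
  qed
  have "fsum n F = sum F (T ` ?A)" unfolding fsum_def im ..
  also have "\<dots> = sum (F \<circ> T) ?A"
    by (rule sum.reindex) (rule inj_on_subset[OF inj], auto)
  finally show ?thesis unfolding fsum_def by (simp add: o_def)
qed



lemma take_app: "length e = n \<Longrightarrow> take n (e @ e') = e" by simp

lemma fin_app: "finite {f. G f \<noteq> 0} \<Longrightarrow> (\<And>e. length e = n \<Longrightarrow> F e \<noteq> 0 \<Longrightarrow> G (e @ e') \<noteq> 0) \<Longrightarrow> fin n F"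
  by (rule fin_image[of "{f. G f \<noteq> 0}" _ _ "take n"]) (auto intro!: image_eqI[where x="_ @ e'"])

lemma fin_app_shift:
  assumes "finite {f. G f \<noteq> 0}"
    and "\<And>e. length e = n \<Longrightarrow> F e \<noteq> 0 \<Longrightarrow> i < n \<and> e ! i \<noteq> 0 \<and> G (e[i := e ! i - 1] @ e') \<noteq> 0"
  shows "fin n F"
proof (rule fin_image[of "{f. G f \<noteq> 0}" _ _ "\<lambda>x. (take n x)[i := take n x ! i + 1]"])
  show "finite {f. G f \<noteq> 0}" by fact
  fix e assume e: "length e = n" "F e \<noteq> 0"
  with assms(2) have *: "i < n" "e ! i \<noteq> 0" "G (e[i := e ! i - 1] @ e') \<noteq> 0" by auto
  have "e = (\<lambda>x. (take n x)[i := take n x ! i + 1]) (e[i := e ! i - 1] @ e')"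
    using e * by (simp add: take_app)
  then show "e \<in> (\<lambda>x. (take n x)[i := take n x ! i + 1]) ` {f. G f \<noteq> 0}" using * by blast
qed

lemma sum_split_at:
  assumes "h \<le> (k::nat)"
  shows "(\<Sum>i<k. f i) = (\<Sum>i<h. f i) + (\<Sum>i<k - h. f (h + i))"
proof -
  obtain d where k: "k = h + d" using assms le_Suc_ex by blast
  show ?thesis unfolding k by (induction d) (auto simp: ac_simps)
qed

locale ctx =
  fixes sM :: "'f::field_char_0 \<Rightarrow> 'm::ab_group_add \<Rightarrow> 'm" and dM :: "'m \<Rightarrow> 'm"
    and mul :: "'m \<Rightarrow> 'm \<Rightarrow> 'm"
  assumes vs: "vector_space sM" and lin: "Vector_Spaces.linear sM sM dM"
    and madd: "\<forall>x x' y. mul (x + x') y = mul x y + mul x' y"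
    and mscale: "\<forall>c x y. mul (sM c x) y = sM c (mul x y)"
    and mcomm: "\<forall>x y. mul x y = mul y x"
    and mder: "\<forall>x y. dM (mul x y) = mul (dM x) y + mul x (dM y)"
begin

lemma dM_add: "dM (x + y) = dM x + dM y"
  using lin unfolding Vector_Spaces.linear_iff by blast
lemma dM_scale: "dM (sM c x) = sM c (dM x)"
  using lin unfolding Vector_Spaces.linear_iff by blast
lemma addh_dM: "addh dM" unfolding addh_def by (simp add: dM_add)
lemma sM_add: "sM c (x + y) = sM c x + sM c y"
  using vs unfolding vector_space_def by blast
lemma sM_ladd: "sM (c + d) x = sM c x + sM d x"
  using vs unfolding vector_space_def by blast
lemma sM_sM: "sM c (sM d x) = sM (c * d) x"
  using vs unfolding vector_space_def by blast
lemma sM_one: "sM 1 x = x"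
  using vs unfolding vector_space_def by blast
lemma addh_sM: "addh (sM c)" unfolding addh_def by (simp add: sM_add)
lemma addh_sM_left: "addh (\<lambda>c. sM c x)" unfolding addh_def by (simp add: sM_ladd)
lemma sM_zero[simp]: "sM c 0 = 0" by (rule addh_zero[OF addh_sM])
lemma sM_zero_left[simp]: "sM 0 x = 0" by (rule addh_zero[OF addh_sM_left])
lemma dM_zero[simp]: "dM 0 = 0" by (rule addh_zero[OF addh_dM])
lemma addh_mul1: "addh (\<lambda>x. mul x y)" unfolding addh_def using madd by blast
lemma addh_mul2: "addh (\<lambda>y. mul x y)" unfolding addh_def using madd mcomm by metis
lemma mul_zero1[simp]: "mul 0 y = 0" using addh_zero[OF addh_mul1] .
lemma mul_zero2[simp]: "mul x 0 = 0" using addh_zero[OF addh_mul2] .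
lemma mul_scale2: "mul x (sM c y) = sM c (mul x y)" using mscale mcomm by metis
lemma mul_add2: "mul x (y + z) = mul x y + mul x z" using addh_mul2 unfolding addh_def by blast
lemma mul_add1: "mul (y + z) x = mul y x + mul z x" using madd by blast
lemma mul_sum2: "mul x (sum f A) = (\<Sum>a\<in>A. mul x (f a))" using addh_sum[OF addh_mul2] .
lemma mul_sum1: "mul (sum f A) x = (\<Sum>a\<in>A. mul (f a) x)" using addh_sum[OF addh_mul1] .
lemma mul_diff1: "mul (y - z) x = mul y x - mul z x" using addh_diff[OF addh_mul1] .
lemma sM_sum: "sM c (sum f A) = (\<Sum>a\<in>A. sM c (f a))" using addh_sum[OF addh_sM] .
lemma dM_sum: "dM (sum f A) = (\<Sum>a\<in>A. dM (f a))" using addh_sum[OF addh_dM] .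

lemma contr_C:
  assumes "finite {f. g (as @ bs) f \<noteq> 0}"
  shows "contr_gen mul h as \<phi> g bs e' = fsum h (\<lambda>e. mul (\<phi> e) (g (as @ bs) (e @ e')))"
proof -
  let ?A = "{e. length e = h \<and> g (as @ bs) (e @ e') \<noteq> 0}"
  have "fin h (\<lambda>e. g (as @ bs) (e @ e'))" by (rule fin_app[OF assms]) auto
  then have fA: "finite ?A" unfolding fin_def .
  show ?thesis unfolding contr_gen_def
    by (rule fsum_superset[OF fA, symmetric]) auto
qed

end



lemma coch_len: assumes "cochain sA dA sM k g" "length as \<noteq> k \<or> length e \<noteq> k" shows "g as e = 0"
proof -
  have H: "\<forall>as e. length as \<noteq> k \<or> length e \<noteq> k \<longrightarrow> g as e = 0"
    using assms(1) unfolding cochain_def by (elim conjE) assumption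
  show ?thesis using H assms(2) by blast
qed
lemma coch_fin: assumes "cochain sA dA sM k g" shows "finite {e. g as e \<noteq> 0}"
proof -
  have H: "\<forall>as. finite {e. g as e \<noteq> 0}"
    using assms(1) unfolding cochain_def by (elim conjE) assumption
  show ?thesis using H by blast
qed
lemma coch_add: assumes "cochain sA dA sM k g" "length as = k" "i < k"
  shows "g (as[i := x + y]) e = g (as[i := x]) e + g (as[i := y]) e"
proof -
  have H: "\<forall>as i x y e. length as = k \<longrightarrow> i < k \<longrightarrow>
        g (as[i := x + y]) e = g (as[i := x]) e + g (as[i := y]) e"
    using assms(1) unfolding cochain_def by (elim conjE) assumption
  show ?thesis using H assms(2,3) by blast
qed
lemma coch_scale: assumes "cochain sA dA sM k g" "length as = k" "i < k"
  shows "g (as[i := sA c x]) e = sM c (g (as[i := x]) e)"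
proof -
  have H: "\<forall>as i c x e. length as = k \<longrightarrow> i < k \<longrightarrow>
        g (as[i := sA c x]) e = sM c (g (as[i := x]) e)"
    using assms(1) unfolding cochain_def by (elim conjE) assumption
  show ?thesis using H assms(2,3) by blast
qed
lemma coch_d: assumes "cochain sA dA sM k g" "length as = k" "length e = k" "i < k"
  shows "g (as[i := dA (as ! i)]) e = - (if e ! i = 0 then 0 else g as (e[i := e ! i - 1]))"
proof -
  have H: "\<forall>as i e. length as = k \<longrightarrow> length e = k \<longrightarrow> i < k \<longrightarrow>
        g (as[i := dA (as ! i)]) e =
          - (if e ! i = 0 then 0 else g as (e[i := e ! i - 1]))"
    using assms(1) unfolding cochain_def by (elim conjE) assumption
  show ?thesis using H assms(2,3,4) by blast
qed
lemma coch_perm: assumes "cochain sA dA sM k g" "length as = k" "length e = k" "\<sigma> permutes {..<k}"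
  shows "g (map (\<lambda>j. as ! \<sigma> j) [0..<k]) (map (\<lambda>j. e ! \<sigma> j) [0..<k]) = sM (of_int (sign \<sigma>)) (g as e)"
proof -
  have H: "\<forall>as e \<sigma>. length as = k \<longrightarrow> length e = k \<longrightarrow> \<sigma> permutes {..<k} \<longrightarrow>
        g (map (\<lambda>j. as ! \<sigma> j) [0..<k]) (map (\<lambda>j. e ! \<sigma> j) [0..<k])
          = sM (of_int (sign \<sigma>)) (g as e)"
    using assms(1) unfolding cochain_def by (elim conjE) assumption
  show ?thesis using H assms(2,3,4) by blast
qed

lemma ab4: "a + b + c - (b + d + c) = a - (d::'a::ab_group_add)" by (simp add: algebra_simps)

context ctx begin

lemma dcoch_fin:
  assumes g: "cochain sA dA sM k g"
  shows "finite {f. dcoch dM k g X f \<noteq> 0}"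
proof -
  let ?S = "{f. g X f \<noteq> 0}"
  have "{f. dcoch dM k g X f \<noteq> 0} \<subseteq> ?S \<union> (\<Union>i<k. (\<lambda>f. f[i := f ! i + 1]) ` ?S)"
  proof
    fix f assume "f \<in> {f. dcoch dM k g X f \<noteq> 0}"
    then have d0: "dcoch dM k g X f \<noteq> 0" by simp
    have cnd: "length X = k \<and> length f = k"
    proof (rule ccontr)
      assume "\<not> (length X = k \<and> length f = k)"
      then have "dcoch dM k g X f = 0" unfolding dcoch_def by auto
      with d0 show False by simp
    qed
    then have lf: "length f = k" by simp
    have nz: "dM (g X f) + (\<Sum>i<k. if f ! i = 0 then 0 else g X (f[i := f ! i - 1])) \<noteq> 0"
      using d0 cnd unfolding dcoch_def by simp
    show "f \<in> ?S \<union> (\<Union>i<k. (\<lambda>f. f[i := f ! i + 1]) ` ?S)"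
    proof (cases "g X f = 0")
      case True
      then have "(\<Sum>i<k. if f ! i = 0 then 0 else g X (f[i := f ! i - 1])) \<noteq> 0" using nz by simp
      then obtain i where i0: "i \<in> {..<k}" "(if f ! i = 0 then 0 else g X (f[i := f ! i - 1])) \<noteq> 0"
        by (rule sum.not_neutral_contains_not_neutral)
      then have i: "i < k" "f ! i \<noteq> 0" "g X (f[i := f ! i - 1]) \<noteq> 0" by (auto split: if_splits)
      have "f = (f[i := f ! i - 1])[i := (f[i := f ! i - 1]) ! i + 1]" using i lf by simp
      then have "f \<in> (\<lambda>f. f[i := f ! i + 1]) ` ?S" using i(3) by (intro image_eqI) auto
      then show ?thesis using i(1) by blast
    qed simp
  qed
  moreover have "finite (?S \<union> (\<Union>i<k. (\<lambda>f. f[i := f ! i + 1]) ` ?S))"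
    using coch_fin[OF g] by auto
  ultimately show ?thesis by (rule finite_subset)
qed

lemma gen_part1:
  assumes g: "cochain sA dA sM k g" and vg: "valid_gen h (as, \<phi>)" and hk: "h \<le> k"
    and lb: "length bs = k - h" and le: "length e' = k - h"
  shows "dM (contr_gen mul h as \<phi> g bs e')
     + (\<Sum>i<k-h. if e' ! i = 0 then 0 else contr_gen mul h as \<phi> g bs (e'[i := e' ! i - 1]))
     - contr_gen mul h as \<phi> (dcoch dM k g) bs e'
     = contr_gen mul h as (dgen_phi dM h \<phi>) g bs e'"
proof -
  define G where "G = g (as @ bs)"
  define n where "n = k - h"
  have la: "length as = h" using vg unfolding valid_gen_def by simp
  have fG: "finite {f. G f \<noteq> 0}" unfolding G_def by (rule coch_fin[OF g])
  have fD: "finite {f. dcoch dM k g (as @ bs) f \<noteq> 0}" by (rule dcoch_fin[OF g])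
  define T1 where "T1 = (\<lambda>e. mul (dM (\<phi> e)) (G (e @ e')))"
  define T2 where "T2 = (\<lambda>e. mul (\<phi> e) (dM (G (e @ e'))))"
  define T3 where "T3 = (\<lambda>i e. if e ! i = 0 then 0 else mul (\<phi> e) (G (e[i := e ! i - 1] @ e')))"
  define T4 where "T4 = (\<lambda>i e. mul (\<phi> e) (G (e @ e'[i := e' ! i - 1])))"
  define L where "L = (\<lambda>i e. mul (lam_star h i \<phi> e) (G (e @ e')))"
  have f0: "fin h (\<lambda>e. mul (\<phi> e) (G (e @ e')))" by (rule fin_app[OF fG, where e'=e']) auto
  have f1: "fin h T1" unfolding T1_def by (rule fin_app[OF fG, where e'=e']) auto
  have f2: "fin h T2" unfolding T2_def by (rule fin_app[OF fG, where e'=e']) auto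
  have f3: "fin h (T3 i)" if "i < h" for i
    unfolding T3_def using that by (intro fin_app_shift[OF fG, where e'=e' and i=i]) (auto split: if_splits)
  have f4: "fin h (T4 i)" for i
    unfolding T4_def by (rule fin_app[OF fG, where e'="e'[i := e' ! i - 1]"]) auto
  have fL: "fin h (L i)" for i unfolding L_def by (rule fin_app[OF fG, where e'=e']) auto
  have C0: "contr_gen mul h as \<phi> g bs e'' = fsum h (\<lambda>e. mul (\<phi> e) (G (e @ e'')))" for e''
    unfolding G_def by (rule contr_C) (rule coch_fin[OF g])
  have Cd: "contr_gen mul h as (dgen_phi dM h \<phi>) g bs e' = fsum h (\<lambda>e. mul (dgen_phi dM h \<phi> e) (G (e @ e')))"
    unfolding G_def by (rule contr_C) (rule coch_fin[OF g])
  have CD: "contr_gen mul h as \<phi> (dcoch dM k g) bs e' = fsum h (\<lambda>e. mul (\<phi> e) (dcoch dM k g (as @ bs) (e @ e')))"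
    by (rule contr_C[where g="dcoch dM k g" and as=as and bs=bs, OF fD])
  have sa: "dM (fsum h (\<lambda>e. mul (\<phi> e) (G (e @ e')))) = fsum h T1 + fsum h T2"
  proof -
    have "dM (fsum h (\<lambda>e. mul (\<phi> e) (G (e @ e')))) = fsum h (\<lambda>e. dM (mul (\<phi> e) (G (e @ e'))))"
      by (rule fsum_hom[OF f0 addh_dM, symmetric])
    also have "\<dots> = fsum h (\<lambda>e. T1 e + T2 e)"
      unfolding T1_def T2_def using mder by simp
    also have "\<dots> = fsum h T1 + fsum h T2" by (rule fsum_add[OF f1 f2])
    finally show ?thesis .
  qed
  have sb: "fsum h (\<lambda>e. mul (\<phi> e) (dcoch dM k g (as @ bs) (e @ e')))
      = fsum h T2 + (\<Sum>i<h. fsum h (T3 i)) + (\<Sum>i<n. if e' ! i = 0 then 0 else fsum h (T4 i))"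
  proof -
    have pw: "mul (\<phi> e) (dcoch dM k g (as @ bs) (e @ e'))
       = T2 e + (\<Sum>i<h. T3 i e) + (\<Sum>i<n. if e' ! i = 0 then 0 else T4 i e)" if le': "length e = h" for e
    proof -
      have "dcoch dM k g (as @ bs) (e @ e') = dM (G (e @ e'))
          + (\<Sum>i<k. if (e @ e') ! i = 0 then 0 else G ((e @ e')[i := (e @ e') ! i - 1]))"
        unfolding dcoch_def G_def using la lb le le' hk by simp
      also have "(\<Sum>i<k. if (e @ e') ! i = 0 then 0 else G ((e @ e')[i := (e @ e') ! i - 1]))
          = (\<Sum>i<h. if e ! i = 0 then 0 else G (e[i := e ! i - 1] @ e'))
            + (\<Sum>i<n. if e' ! i = 0 then 0 else G (e @ e'[i := e' ! i - 1]))"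
      proof -
        have a: "(\<Sum>i<h. if (e @ e') ! i = 0 then 0 else G ((e @ e')[i := (e @ e') ! i - 1]))
           = (\<Sum>i<h. if e ! i = 0 then 0 else G (e[i := e ! i - 1] @ e'))"
          by (rule sum.cong) (use le' in \<open>auto simp: nth_append list_update_append\<close>)
        have b: "(\<Sum>i<n. if (e @ e') ! (h + i) = 0 then 0 else G ((e @ e')[h + i := (e @ e') ! (h + i) - 1]))
           = (\<Sum>i<n. if e' ! i = 0 then 0 else G (e @ e'[i := e' ! i - 1]))"
          by (rule sum.cong) (use le' in \<open>auto simp: nth_append list_update_append\<close>)
        show ?thesis unfolding sum_split_at[OF hk] n_def[symmetric] a b ..
      qed
      finally have "dcoch dM k g (as @ bs) (e @ e') = dM (G (e @ e'))
          + (\<Sum>i<h. if e ! i = 0 then 0 else G (e[i := e ! i - 1] @ e'))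
            + (\<Sum>i<n. if e' ! i = 0 then 0 else G (e @ e'[i := e' ! i - 1]))" by simp
      then show ?thesis
        unfolding T2_def T3_def T4_def
        by (simp add: mul_add2 mul_sum2 if_distrib[of "mul (\<phi> e)"] mul_zero2 cong: if_cong)
    qed
    have "fsum h (\<lambda>e. mul (\<phi> e) (dcoch dM k g (as @ bs) (e @ e')))
        = fsum h (\<lambda>e. T2 e + (\<Sum>i<h. T3 i e) + (\<Sum>i<n. if e' ! i = 0 then 0 else T4 i e))"
      by (rule fsum_cong) (rule pw)
    also have "\<dots> = fsum h T2 + fsum h (\<lambda>e. \<Sum>i<h. T3 i e) + fsum h (\<lambda>e. \<Sum>i<n. if e' ! i = 0 then 0 else T4 i e)"
    proof -
      have f3s: "fin h (\<lambda>e. \<Sum>i<h. T3 i e)" using f3 by (intro fin_sum) auto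
      have f4i: "fin h (\<lambda>e. if e' ! i = 0 then 0 else T4 i e)" for i
        using f4[of i] fin_zero by (cases "e' ! i = 0") auto
      have f4s: "fin h (\<lambda>e. \<Sum>i<n. if e' ! i = 0 then 0 else T4 i e)" using f4i by (intro fin_sum) auto
      show ?thesis using fsum_add[OF fin_add[OF f2 f3s] f4s] fsum_add[OF f2 f3s] by simp
    qed
    also have "fsum h (\<lambda>e. \<Sum>i<h. T3 i e) = (\<Sum>i<h. fsum h (T3 i))"
      using f3 by (intro fsum_sum) auto
    also have "fsum h (\<lambda>e. \<Sum>i<n. if e' ! i = 0 then 0 else T4 i e) = (\<Sum>i<n. fsum h (\<lambda>e. if e' ! i = 0 then 0 else T4 i e))"
    proof (rule fsum_sum, simp)
      fix i show "fin h (\<lambda>e. if e' ! i = 0 then 0 else T4 i e)"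
        using f4[of i] fin_zero by (cases "e' ! i = 0") auto
    qed
    also have "\<dots> = (\<Sum>i<n. if e' ! i = 0 then 0 else fsum h (T4 i))"
      by (rule sum.cong) (auto simp: fsum_zero)
    finally show ?thesis .
  qed
  have sc: "fsum h (T3 i) = fsum h (L i)" if i: "i < h" for i
  proof -
    let ?T = "\<lambda>f::nat list. f[i := f ! i + 1]"
    have inj: "inj_on ?T {e. length e = h}"
    proof (rule inj_onI)
      fix x y assume x: "x \<in> {e. length e = h}" and y: "y \<in> {e. length e = h}" and eq: "?T x = ?T y"
      have "?T x ! i = ?T y ! i" using eq by simp
      then have xi: "x ! i = y ! i" using x y i by simp
      show "x = y"
      proof (rule nth_equalityI)
        show "length x = length y" using x y by simp
        fix j assume "j < length x"
        have "?T x ! j = ?T y ! j" using eq by simp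
        then show "x ! j = y ! j" using xi by (cases "j = i") auto
      qed
    qed
    have img: "?T ` {e. length e = h} \<subseteq> {e. length e = h}" by auto
    have van: "T3 i e = 0" if "length e = h" "e \<notin> ?T ` {e. length e = h}" for e
    proof (cases "e ! i = 0")
      case False
      have "e = ?T (e[i := e ! i - 1])" using False that(1) i by simp
      moreover have "e[i := e ! i - 1] \<in> {e. length e = h}" using that(1) by simp
      ultimately show ?thesis using that(2) by blast
    qed (simp add: T3_def)
    have "fsum h (T3 i) = fsum h (\<lambda>e. T3 i (?T e))" by (rule fsum_reindex[OF inj img van, symmetric])
    also have "\<dots> = fsum h (L i)"
      by (rule fsum_cong) (simp add: T3_def L_def lam_star_def i)
    finally show ?thesis .
  qed
  have sd: "fsum h (\<lambda>e. mul (dgen_phi dM h \<phi> e) (G (e @ e'))) = fsum h T1 - (\<Sum>i<h. fsum h (L i))"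
  proof -
    have "fsum h (\<lambda>e. mul (dgen_phi dM h \<phi> e) (G (e @ e'))) = fsum h (\<lambda>e. T1 e - (\<Sum>i<h. L i e))"
    proof (rule fsum_cong)
      fix e :: "nat list" assume "length e = h"
      then have "dgen_phi dM h \<phi> e = dM (\<phi> e) - (\<Sum>i<h. lam_star h i \<phi> e)"
        unfolding dgen_phi_def by simp
      then show "mul (dgen_phi dM h \<phi> e) (G (e @ e')) = T1 e - (\<Sum>i<h. L i e)"
        unfolding T1_def L_def by (simp only: mul_diff1 mul_sum1)
    qed
    also have "\<dots> = fsum h T1 - (\<Sum>i<h. fsum h (L i))"
    proof -
      have fLs: "fin h (\<lambda>e. \<Sum>i<h. L i e)" using fL by (intro fin_sum) auto
      have "fsum h (\<lambda>e. \<Sum>i<h. L i e) = (\<Sum>i<h. fsum h (L i))" using fL by (intro fsum_sum) auto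
      then show ?thesis using fsum_diff[OF f1 fLs] by simp
    qed
    finally show ?thesis .
  qed
  have C4: "contr_gen mul h as \<phi> g bs (e'[i := e' ! i - 1]) = fsum h (T4 i)" for i
    unfolding C0 T4_def ..
  have s3: "(\<Sum>i<h. fsum h (T3 i)) = (\<Sum>i<h. fsum h (L i))" using sc by (intro sum.cong) auto
  have C4': "(\<Sum>i<n. if e' ! i = 0 then 0 else fsum h (\<lambda>e. mul (\<phi> e) (G (e @ e'[i := e' ! i - 1]))))
     = (\<Sum>i<n. if e' ! i = 0 then 0 else fsum h (T4 i))" unfolding T4_def ..
  show ?thesis
    unfolding C0 Cd CD sa sb sd n_def[symmetric] s3 C4'
    by (rule ab4)
qed

end


context ctx begin

lemma iota_good: "h \<le> k \<Longrightarrow> length bs = k - h \<Longrightarrow> length e' = k - h \<Longrightarrow>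
  iota sM mul h k \<xi> g bs e' = (\<Sum>p\<in>{p. \<xi> p \<noteq> 0}. sM (\<xi> p) (contr_gen mul h (fst p) (snd p) g bs e'))"
  unfolding iota_def by simp

lemma iota_bad: "\<not> (h \<le> k \<and> length bs = k - h \<and> length e' = k - h) \<Longrightarrow> iota sM mul h k \<xi> g bs e' = 0"
  unfolding iota_def by auto

lemma regroup:
  fixes \<xi> :: "'a list \<times> (nat list \<Rightarrow> 'm) \<Rightarrow> 'f"
  assumes fS: "finite {p. \<xi> p \<noteq> 0}"
  shows "(\<Sum>p\<in>{p. \<xi> p \<noteq> 0}. sM (\<xi> p) (K (fst p, dgen_phi dM h (snd p))))
    = (\<Sum>q\<in>{q. dchain dM h \<xi> q \<noteq> 0}. sM (dchain dM h \<xi> q) (K q))"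
proof -
  define S where "S = {p. \<xi> p \<noteq> 0}"
  define \<Phi> where "\<Phi> = (\<lambda>p :: 'a list \<times> (nat list \<Rightarrow> 'm). (fst p, dgen_phi dM h (snd p)))"
  have dc: "dchain dM h \<xi> q = (\<Sum>p\<in>{p\<in>S. \<Phi> p = q}. \<xi> p)" for q
  proof (cases q)
    case (Pair a \<psi>)
    have "{p. \<xi> p \<noteq> 0 \<and> fst p = a \<and> dgen_phi dM h (snd p) = \<psi>} = {p\<in>S. \<Phi> p = q}"
      unfolding S_def \<Phi>_def Pair by auto
    then show ?thesis unfolding dchain_def Pair by simp
  qed
  have fin: "finite S" using fS unfolding S_def .
  have "(\<Sum>p\<in>S. sM (\<xi> p) (K (\<Phi> p))) = (\<Sum>q\<in>\<Phi> ` S. \<Sum>p\<in>{p\<in>S. \<Phi> p = q}. sM (\<xi> p) (K (\<Phi> p)))"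
    by (rule sum.image_gen[OF fin])
  also have "\<dots> = (\<Sum>q\<in>\<Phi> ` S. sM (dchain dM h \<xi> q) (K q))"
  proof (rule sum.cong[OF refl])
    fix q assume "q \<in> \<Phi> ` S"
    have "(\<Sum>p\<in>{p\<in>S. \<Phi> p = q}. sM (\<xi> p) (K (\<Phi> p))) = (\<Sum>p\<in>{p\<in>S. \<Phi> p = q}. sM (\<xi> p) (K q))"
      by (rule sum.cong) auto
    also have "\<dots> = sM (\<Sum>p\<in>{p\<in>S. \<Phi> p = q}. \<xi> p) (K q)"
      by (rule addh_sum[OF addh_sM_left, symmetric])
    finally show "(\<Sum>p\<in>{p\<in>S. \<Phi> p = q}. sM (\<xi> p) (K (\<Phi> p))) = sM (dchain dM h \<xi> q) (K q)"
      unfolding dc .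
  qed
  also have "\<dots> = (\<Sum>q\<in>{q. dchain dM h \<xi> q \<noteq> 0}. sM (dchain dM h \<xi> q) (K q))"
  proof (rule sum.mono_neutral_right)
    show "finite (\<Phi> ` S)" using fin by simp
    show "{q. dchain dM h \<xi> q \<noteq> 0} \<subseteq> \<Phi> ` S"
    proof
      fix q assume "q \<in> {q. dchain dM h \<xi> q \<noteq> 0}"
      then have "(\<Sum>p\<in>{p\<in>S. \<Phi> p = q}. \<xi> p) \<noteq> 0" unfolding dc by simp
      then obtain p where "p \<in> {p\<in>S. \<Phi> p = q}"
        by (rule sum.not_neutral_contains_not_neutral)
      then show "q \<in> \<Phi> ` S" by blast
    qed
    show "\<forall>q\<in>\<Phi> ` S - {q. dchain dM h \<xi> q \<noteq> 0}. sM (dchain dM h \<xi> q) (K q) = 0" by simp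
  qed
  finally show ?thesis unfolding S_def \<Phi>_def .
qed

lemma dcoch_zero: "dcoch dM n (\<lambda>_ _. 0) bs e = 0"
  unfolding dcoch_def by simp

lemma part1:
  assumes xi: "chain_rep h \<xi>" and g: "cochain sA dA sM k g"
  shows "dcoch dM (k - h) (iota sM mul h k \<xi> g) bs e' - iota sM mul h k \<xi> (dcoch dM k g) bs e'
       = iota sM mul h k (dchain dM h \<xi>) g bs e'"
proof (cases "h \<le> k \<and> length bs = k - h \<and> length e' = k - h")
  case False
  show ?thesis
  proof (cases "h \<le> k")
    case True
    with False have "\<not> (length bs = k - h \<and> length e' = k - h)" by simp
    then show ?thesis using False by (auto simp: iota_bad dcoch_def)
  next
    case hk: False
    have "iota sM mul h k \<xi> g = (\<lambda>_ _. 0)" using hk by (simp add: fun_eq_iff iota_def)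
    then show ?thesis using False by (simp add: iota_bad dcoch_zero)
  qed
next
  case True
  then have hk: "h \<le> k" and lb: "length bs = k - h" and le: "length e' = k - h" by auto
  define n where "n = k - h"
  define S where "S = {p. \<xi> p \<noteq> 0}"
  have fS: "finite S" using xi unfolding chain_rep_def S_def by simp
  have vS: "valid_gen h p" if "p \<in> S" for p using xi that unfolding chain_rep_def S_def by blast
  define Cp where "Cp = (\<lambda>p e''. contr_gen mul h (fst p) (snd p) g bs e'')"
  have I1: "iota sM mul h k \<xi> g bs e'' = (\<Sum>p\<in>S. sM (\<xi> p) (Cp p e''))" if "length e'' = n" for e''
    unfolding Cp_def S_def by (rule iota_good[OF hk lb that[unfolded n_def]])
  have I2: "iota sM mul h k \<xi> (dcoch dM k g) bs e' = (\<Sum>p\<in>S. sM (\<xi> p) (contr_gen mul h (fst p) (snd p) (dcoch dM k g) bs e'))"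
    unfolding S_def by (rule iota_good[OF hk lb le])
  have I3: "iota sM mul h k (dchain dM h \<xi>) g bs e' =
     (\<Sum>q\<in>{q. dchain dM h \<xi> q \<noteq> 0}. sM (dchain dM h \<xi> q) (contr_gen mul h (fst q) (snd q) g bs e'))"
    by (rule iota_good[OF hk lb le])
  have D1: "dcoch dM n (iota sM mul h k \<xi> g) bs e' = dM (iota sM mul h k \<xi> g bs e')
      + (\<Sum>i<n. if e' ! i = 0 then 0 else iota sM mul h k \<xi> g bs (e'[i := e' ! i - 1]))"
    unfolding dcoch_def using lb le n_def by simp
  have A1: "dM (iota sM mul h k \<xi> g bs e') = (\<Sum>p\<in>S. sM (\<xi> p) (dM (Cp p e')))"
    using I1[of e'] le n_def by (simp add: dM_sum dM_scale)
  have A2: "(\<Sum>i<n. if e' ! i = 0 then 0 else iota sM mul h k \<xi> g bs (e'[i := e' ! i - 1]))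
     = (\<Sum>p\<in>S. sM (\<xi> p) (\<Sum>i<n. if e' ! i = 0 then 0 else Cp p (e'[i := e' ! i - 1])))"
  proof -
    have "(\<Sum>i<n. if e' ! i = 0 then 0 else iota sM mul h k \<xi> g bs (e'[i := e' ! i - 1]))
       = (\<Sum>i<n. \<Sum>p\<in>S. sM (\<xi> p) (if e' ! i = 0 then 0 else Cp p (e'[i := e' ! i - 1])))"
    proof (rule sum.cong[OF refl])
      fix i assume "i \<in> {..<n}"
      show "(if e' ! i = 0 then 0 else iota sM mul h k \<xi> g bs (e'[i := e' ! i - 1]))
         = (\<Sum>p\<in>S. sM (\<xi> p) (if e' ! i = 0 then 0 else Cp p (e'[i := e' ! i - 1])))"
        using I1[of "e'[i := e' ! i - 1]"] le n_def by simp
    qed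
    also have "\<dots> = (\<Sum>p\<in>S. \<Sum>i<n. sM (\<xi> p) (if e' ! i = 0 then 0 else Cp p (e'[i := e' ! i - 1])))"
      by (rule sum.swap)
    also have "\<dots> = (\<Sum>p\<in>S. sM (\<xi> p) (\<Sum>i<n. if e' ! i = 0 then 0 else Cp p (e'[i := e' ! i - 1])))"
      by (simp add: sM_sum)
    finally show ?thesis .
  qed
  have G: "dM (Cp p e') + (\<Sum>i<n. if e' ! i = 0 then 0 else Cp p (e'[i := e' ! i - 1]))
      - contr_gen mul h (fst p) (snd p) (dcoch dM k g) bs e'
      = contr_gen mul h (fst p) (dgen_phi dM h (snd p)) g bs e'" if "p \<in> S" for p
    using gen_part1[OF g _ hk lb le, of "fst p" "snd p"] vS[OF that] unfolding Cp_def n_def by simp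
  have "dcoch dM (k - h) (iota sM mul h k \<xi> g) bs e' - iota sM mul h k \<xi> (dcoch dM k g) bs e'
     = (\<Sum>p\<in>S. sM (\<xi> p) (dM (Cp p e') + (\<Sum>i<n. if e' ! i = 0 then 0 else Cp p (e'[i := e' ! i - 1]))
      - contr_gen mul h (fst p) (snd p) (dcoch dM k g) bs e'))"
  proof -
    have "(\<Sum>p\<in>S. sM (\<xi> p) (dM (Cp p e') + (\<Sum>i<n. if e' ! i = 0 then 0 else Cp p (e'[i := e' ! i - 1]))
      - contr_gen mul h (fst p) (snd p) (dcoch dM k g) bs e'))
      = (\<Sum>p\<in>S. sM (\<xi> p) (dM (Cp p e')) + sM (\<xi> p) (\<Sum>i<n. if e' ! i = 0 then 0 else Cp p (e'[i := e' ! i - 1]))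
      - sM (\<xi> p) (contr_gen mul h (fst p) (snd p) (dcoch dM k g) bs e'))"
      by (rule sum.cong[OF refl]) (simp only: addh_diff[OF addh_sM] sM_add)
    also have "\<dots> = (\<Sum>p\<in>S. sM (\<xi> p) (dM (Cp p e'))) + (\<Sum>p\<in>S. sM (\<xi> p) (\<Sum>i<n. if e' ! i = 0 then 0 else Cp p (e'[i := e' ! i - 1])))
      - (\<Sum>p\<in>S. sM (\<xi> p) (contr_gen mul h (fst p) (snd p) (dcoch dM k g) bs e'))"
      by (simp only: sum_subtractf sum.distrib)
    finally show ?thesis
      unfolding n_def[symmetric] D1 A1 A2 I2 by simp
  qed
  also have "\<dots> = (\<Sum>p\<in>S. sM (\<xi> p) (contr_gen mul h (fst p) (dgen_phi dM h (snd p)) g bs e'))"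
    by (rule sum.cong) (simp_all add: G)
  also have "\<dots> = iota sM mul h k (dchain dM h \<xi>) g bs e'"
    unfolding I3 S_def
    using regroup[OF fS[unfolded S_def], of "\<lambda>q. contr_gen mul h (fst q) (snd q) g bs e'"] by simp
  finally show ?thesis .
qed

end


context ctx begin

lemma shift_reindex:
  assumes i: "i < h"
  shows "fsum h (\<lambda>e. if e ! i = 0 then 0 else mul (\<phi> e) (G (e[i := e ! i - 1] @ e')))
       = fsum h (\<lambda>e. mul (lam_star h i \<phi> e) (G (e @ e')))"
proof -
  define T3 where "T3 = (\<lambda>e. if e ! i = 0 then 0 else mul (\<phi> e) (G (e[i := e ! i - 1] @ e')))"
  let ?T = "\<lambda>f::nat list. f[i := f ! i + 1]"
  have inj: "inj_on ?T {e. length e = h}"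
  proof (rule inj_onI)
    fix x y assume x: "x \<in> {e. length e = h}" and y: "y \<in> {e. length e = h}" and eq: "?T x = ?T y"
    have "?T x ! i = ?T y ! i" using eq by simp
    then have xi: "x ! i = y ! i" using x y i by simp
    show "x = y"
    proof (rule nth_equalityI)
      show "length x = length y" using x y by simp
      fix j assume "j < length x"
      have "?T x ! j = ?T y ! j" using eq by simp
      then show "x ! j = y ! j" using xi by (cases "j = i") auto
    qed
  qed
  have img: "?T ` {e. length e = h} \<subseteq> {e. length e = h}" by auto
  have van: "T3 e = 0" if "length e = h" "e \<notin> ?T ` {e. length e = h}" for e
  proof (cases "e ! i = 0")
    case False
    have "e = ?T (e[i := e ! i - 1])" using False that(1) i by simp
    moreover have "e[i := e ! i - 1] \<in> {e. length e = h}" using that(1) by simp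
    ultimately show ?thesis using that(2) by blast
  qed (simp add: T3_def)
  have "fsum h T3 = fsum h (\<lambda>e. T3 (?T e))" by (rule fsum_reindex[OF inj img van, symmetric])
  also have "\<dots> = fsum h (\<lambda>e. mul (lam_star h i \<phi> e) (G (e @ e')))"
    by (rule fsum_cong) (simp add: T3_def lam_star_def i)
  finally show ?thesis unfolding T3_def .
qed

lemma gen_add_a:
  assumes g: "cochain sA dA sM k g" and la: "length as = h" and i: "i < h" and hk: "h \<le> k" and lb: "length bs = k - h"
  shows "contr_gen mul h (as[i := x + y]) \<phi> g bs e' = contr_gen mul h (as[i := x]) \<phi> g bs e' + contr_gen mul h (as[i := y]) \<phi> g bs e'"
proof -
  have C: "contr_gen mul h as' \<phi> g bs e' = fsum h (\<lambda>e. mul (\<phi> e) (g (as' @ bs) (e @ e')))" for as'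
    by (rule contr_C[OF coch_fin[OF g]])
  have upd: "as[i := z] @ bs = (as @ bs)[i := z]" for z using la i by (simp add: list_update_append)
  have lk: "length (as @ bs) = k" "i < k" using la lb hk i by auto
  have fx: "fin h (\<lambda>e. mul (\<phi> e) (g (as[i := z] @ bs) (e @ e')))" for z
    by (rule fin_app[OF coch_fin[OF g, where as="as[i := z] @ bs"], where e'=e']) auto
  show ?thesis unfolding C
    unfolding upd coch_add[OF g lk] mul_add2
    using fsum_add[OF fx[unfolded upd] fx[unfolded upd]] by simp
qed

lemma gen_scale_a:
  assumes g: "cochain sA dA sM k g" and la: "length as = h" and i: "i < h" and hk: "h \<le> k" and lb: "length bs = k - h"
  shows "contr_gen mul h (as[i := sA c x]) \<phi> g bs e' = sM c (contr_gen mul h (as[i := x]) \<phi> g bs e')"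
proof -
  have C: "contr_gen mul h as' \<phi> g bs e' = fsum h (\<lambda>e. mul (\<phi> e) (g (as' @ bs) (e @ e')))" for as'
    by (rule contr_C[OF coch_fin[OF g]])
  have upd: "as[i := z] @ bs = (as @ bs)[i := z]" for z using la i by (simp add: list_update_append)
  have lk: "length (as @ bs) = k" "i < k" using la lb hk i by auto
  have fx: "fin h (\<lambda>e. mul (\<phi> e) (g (as[i := z] @ bs) (e @ e')))" for z
    by (rule fin_app[OF coch_fin[OF g, where as="as[i := z] @ bs"], where e'=e']) auto
  show ?thesis unfolding C
    unfolding upd coch_scale[OF g lk] mul_scale2
    using fsum_hom[OF fx[unfolded upd] addh_sM] by simp
qed

lemma gen_add_phi:
  assumes g: "cochain sA dA sM k g"
  shows "contr_gen mul h as (\<lambda>e. \<phi> e + \<psi> e) g bs e' = contr_gen mul h as \<phi> g bs e' + contr_gen mul h as \<psi> g bs e'"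
proof -
  have C: "contr_gen mul h as \<phi>' g bs e' = fsum h (\<lambda>e. mul (\<phi>' e) (g (as @ bs) (e @ e')))" for \<phi>'
    by (rule contr_C[OF coch_fin[OF g]])
  have fx: "fin h (\<lambda>e. mul (\<phi>' e) (g (as @ bs) (e @ e')))" for \<phi>'
    by (rule fin_app[OF coch_fin[OF g, where as="as @ bs"], where e'=e']) auto
  show ?thesis unfolding C mul_add1
    by (rule fsum_add[OF fx fx])
qed

lemma gen_scale_phi:
  assumes g: "cochain sA dA sM k g"
  shows "contr_gen mul h as (\<lambda>e. sM c (\<phi> e)) g bs e' = sM c (contr_gen mul h as \<phi> g bs e')"
proof -
  have C: "contr_gen mul h as \<phi>' g bs e' = fsum h (\<lambda>e. mul (\<phi>' e) (g (as @ bs) (e @ e')))" for \<phi>'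
    by (rule contr_C[OF coch_fin[OF g]])
  have fx: "fin h (\<lambda>e. mul (\<phi>' e) (g (as @ bs) (e @ e')))" for \<phi>'
    by (rule fin_app[OF coch_fin[OF g, where as="as @ bs"], where e'=e']) auto
  show ?thesis unfolding C
    using fsum_hom[OF fx addh_sM] mscale by simp
qed

lemma gen_C1:
  assumes g: "cochain sA dA sM k g" and la: "length as = h" and i: "i < h" and hk: "h \<le> k"
    and lb: "length bs = k - h" and le: "length e' = k - h"
  shows "contr_gen mul h (as[i := dA (as ! i)]) \<phi> g bs e' = - contr_gen mul h as (lam_star h i \<phi>) g bs e'"
proof -
  have C: "contr_gen mul h as' \<phi>' g bs e' = fsum h (\<lambda>e. mul (\<phi>' e) (g (as' @ bs) (e @ e')))" for as' \<phi>'
    by (rule contr_C[OF coch_fin[OF g]])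
  have upd: "as[i := dA (as ! i)] @ bs = (as @ bs)[i := dA ((as @ bs) ! i)]" using la i
    by (simp add: list_update_append nth_append)
  have lk: "length (as @ bs) = k" "i < k" using la lb hk i by auto
  have pw: "mul (\<phi> e) (g (as[i := dA (as ! i)] @ bs) (e @ e'))
     = - (if e ! i = 0 then 0 else mul (\<phi> e) (g (as @ bs) (e[i := e ! i - 1] @ e')))" if le': "length e = h" for e
  proof -
    have "length (e @ e') = k" using le' le hk by simp
    from coch_d[OF g lk(1) this lk(2)]
    have "g (as[i := dA (as ! i)] @ bs) (e @ e') = - (if e ! i = 0 then 0 else g (as @ bs) (e[i := e ! i - 1] @ e'))"
      unfolding upd using le' i by (simp add: nth_append list_update_append)
    then show ?thesis by (simp add: addh_neg[OF addh_mul2])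
  qed
  have fT: "fin h (\<lambda>e. if e ! i = 0 then 0 else mul (\<phi> e) (g (as @ bs) (e[i := e ! i - 1] @ e')))"
    using i by (intro fin_app_shift[OF coch_fin[OF g, where as="as @ bs"], where e'=e' and i=i]) (auto split: if_splits)
  have "contr_gen mul h (as[i := dA (as ! i)]) \<phi> g bs e'
     = fsum h (\<lambda>e. - (if e ! i = 0 then 0 else mul (\<phi> e) (g (as @ bs) (e[i := e ! i - 1] @ e'))))"
    unfolding C by (rule fsum_cong) (rule pw)
  also have "\<dots> = - fsum h (\<lambda>e. if e ! i = 0 then 0 else mul (\<phi> e) (g (as @ bs) (e[i := e ! i - 1] @ e')))"
    by (rule fsum_neg[OF fT])
  also have "\<dots> = - contr_gen mul h as (lam_star h i \<phi>) g bs e'"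
    unfolding C shift_reindex[OF i] ..
  finally show ?thesis .
qed

end


context ctx begin

lemma gen_C2:
  assumes g: "cochain sA dA sM k g" and la: "length as = h" and \<sigma>: "\<sigma> permutes {..<h}" and hk: "h \<le> k"
    and lb: "length bs = k - h" and le: "length e' = k - h"
  shows "contr_gen mul h (map (\<lambda>j. as ! \<sigma> j) [0..<h]) (perm_star h \<sigma> \<phi>) g bs e'
     = sM (of_int (sign \<sigma>)) (contr_gen mul h as \<phi> g bs e')"
proof -
  define as' where "as' = map (\<lambda>j. as ! \<sigma> j) [0..<h]"
  define T where "T = (\<lambda>f::nat list. map (\<lambda>j. f ! \<sigma> j) [0..<h])"
  define s where "s = sM (of_int (sign \<sigma>))"
  have \<sigma>k: "\<sigma> permutes {..<k}" using permutes_subset[OF \<sigma>] hk by auto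
  have sl: "\<sigma> j < h" if "j < h" for j using permutes_in_image[OF \<sigma>, of j] that by simp
  have il: "inv \<sigma> j < h" if "j < h" for j using permutes_in_image[OF permutes_inv[OF \<sigma>], of j] that by simp
  have si: "\<sigma> (inv \<sigma> j) = j" for j by (rule permutes_inverses(1)[OF \<sigma>])
  have sout: "\<sigma> j = j" if "\<not> j < h" for j using permutes_not_in[OF \<sigma>, of j] that by simp
  have listA: "map (\<lambda>j. (as @ bs) ! \<sigma> j) [0..<k] = as' @ bs"
  proof (rule nth_equalityI)
    show "length (map (\<lambda>j. (as @ bs) ! \<sigma> j) [0..<k]) = length (as' @ bs)"
      using la lb hk by (simp add: as'_def)
    fix j assume "j < length (map (\<lambda>j. (as @ bs) ! \<sigma> j) [0..<k])"
    then have j: "j < k" by simp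
    show "map (\<lambda>j. (as @ bs) ! \<sigma> j) [0..<k] ! j = (as' @ bs) ! j"
      using j sl[of j] sout[of j] la by (cases "j < h") (auto simp: as'_def nth_append)
  qed
  have listE: "map (\<lambda>j. (f @ e') ! \<sigma> j) [0..<k] = T f @ e'" if lf: "length f = h" for f
  proof (rule nth_equalityI)
    show "length (map (\<lambda>j. (f @ e') ! \<sigma> j) [0..<k]) = length (T f @ e')"
      using lf le hk by (simp add: T_def)
    fix j assume "j < length (map (\<lambda>j. (f @ e') ! \<sigma> j) [0..<k])"
    then have j: "j < k" by simp
    show "map (\<lambda>j. (f @ e') ! \<sigma> j) [0..<k] ! j = (T f @ e') ! j"
      using j sl[of j] sout[of j] lf by (cases "j < h") (auto simp: T_def nth_append)
  qed
  have Tinv: "map (\<lambda>j. T f ! inv \<sigma> j) [0..<h] = f" if lf: "length f = h" for f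
    by (rule nth_equalityI) (use lf il si in \<open>auto simp: T_def\<close>)
  have TT: "T (map (\<lambda>j. f ! inv \<sigma> j) [0..<h]) = f" if lf: "length f = h" for f
    by (rule nth_equalityI) (use lf sl permutes_inverses(2)[OF \<sigma>] in \<open>auto simp: T_def\<close>)
  have inj: "inj_on T {e. length e = h}"
  proof (rule inj_onI)
    fix x y assume x: "x \<in> {e. length e = h}" and y: "y \<in> {e. length e = h}" and "T x = T y"
    then have "map (\<lambda>j. T x ! inv \<sigma> j) [0..<h] = map (\<lambda>j. T y ! inv \<sigma> j) [0..<h]" by (simp only:)
    then show "x = y" using Tinv[of x] Tinv[of y] x y by (simp only: mem_Collect_eq)
  qed
  have img: "T ` {e. length e = h} \<subseteq> {e. length e = h}" by (auto simp: T_def)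
  have van: "F e = 0" if "length e = h" "e \<notin> T ` {e. length e = h}" for e and F :: "nat list \<Rightarrow> 'm"
  proof -
    have "e = T (map (\<lambda>j. e ! inv \<sigma> j) [0..<h])" using TT that(1) by simp
    then have "e \<in> T ` {e. length e = h}" by auto
    with that(2) show ?thesis by blast
  qed
  have C: "contr_gen mul h as'' \<phi>' g bs e' = fsum h (\<lambda>e. mul (\<phi>' e) (g (as'' @ bs) (e @ e')))" for as'' \<phi>'
    by (rule contr_C[OF coch_fin[OF g]])
  have fx: "fin h (\<lambda>e. mul (\<phi> e) (g (as @ bs) (e @ e')))"
    by (rule fin_app[OF coch_fin[OF g, where as="as @ bs"], where e'=e']) auto
  have "contr_gen mul h as' (perm_star h \<sigma> \<phi>) g bs e'
      = fsum h (\<lambda>f. mul (perm_star h \<sigma> \<phi> (T f)) (g (as' @ bs) (T f @ e')))"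
    unfolding C by (rule fsum_reindex[OF inj img van, symmetric])
  also have "\<dots> = fsum h (\<lambda>f. s (mul (\<phi> f) (g (as @ bs) (f @ e'))))"
  proof (rule fsum_cong)
    fix f :: "nat list" assume lf: "length f = h"
    have p: "perm_star h \<sigma> \<phi> (T f) = \<phi> f"
      unfolding perm_star_def using Tinv[OF lf] by (simp add: T_def)
    have lae: "length (as @ bs) = k" "length (f @ e') = k" using la lb lf le hk by auto
    have "g (as' @ bs) (T f @ e') = s (g (as @ bs) (f @ e'))"
      unfolding s_def listA[symmetric] listE[OF lf, symmetric] by (rule coch_perm[OF g lae \<sigma>k])
    then show "mul (perm_star h \<sigma> \<phi> (T f)) (g (as' @ bs) (T f @ e')) = s (mul (\<phi> f) (g (as @ bs) (f @ e')))"
      unfolding p s_def by (simp add: mul_scale2)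
  qed
  also have "\<dots> = s (contr_gen mul h as \<phi> g bs e')"
    unfolding C s_def by (rule fsum_hom[OF fx addh_sM])
  finally show ?thesis unfolding as'_def s_def .
qed

lemma iota_superset:
  assumes "finite U" "{p. \<xi> p \<noteq> 0} \<subseteq> U" "h \<le> k" "length bs = k - h" "length e' = k - h"
  shows "iota sM mul h k \<xi> g bs e' = (\<Sum>p\<in>U. sM (\<xi> p) (contr_gen mul h (fst p) (snd p) g bs e'))"
  unfolding iota_good[OF assms(3-5)]
  by (rule sum.mono_neutral_left) (use assms(1,2) in auto)

lemma iota_diff:
  assumes "finite {p. \<xi> p \<noteq> 0}" "finite {p. \<eta> p \<noteq> 0}"
  shows "iota sM mul h k (\<lambda>p. \<xi> p - \<eta> p) g bs e' = iota sM mul h k \<xi> g bs e' - iota sM mul h k \<eta> g bs e'"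
proof (cases "h \<le> k \<and> length bs = k - h \<and> length e' = k - h")
  case True
  let ?U = "{p. \<xi> p \<noteq> 0} \<union> {p. \<eta> p \<noteq> 0}"
  have fU: "finite ?U" using assms by simp
  have a: "iota sM mul h k (\<lambda>p. \<xi> p - \<eta> p) g bs e' = (\<Sum>p\<in>?U. sM (\<xi> p - \<eta> p) (contr_gen mul h (fst p) (snd p) g bs e'))"
    by (rule iota_superset[OF fU]) (use True in auto)
  have b: "iota sM mul h k \<xi> g bs e' = (\<Sum>p\<in>?U. sM (\<xi> p) (contr_gen mul h (fst p) (snd p) g bs e'))"
    by (rule iota_superset[OF fU]) (use True in auto)
  have c: "iota sM mul h k \<eta> g bs e' = (\<Sum>p\<in>?U. sM (\<eta> p) (contr_gen mul h (fst p) (snd p) g bs e'))"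
    by (rule iota_superset[OF fU]) (use True in auto)
  show ?thesis unfolding a b c addh_diff[OF addh_sM_left] sum_subtractf ..
qed (simp add: iota_bad)

lemma iota_add:
  assumes "finite {p. \<xi> p \<noteq> 0}" "finite {p. \<eta> p \<noteq> 0}"
  shows "iota sM mul h k (\<lambda>p. \<xi> p + \<eta> p) g bs e' = iota sM mul h k \<xi> g bs e' + iota sM mul h k \<eta> g bs e'"
proof (cases "h \<le> k \<and> length bs = k - h \<and> length e' = k - h")
  case True
  let ?U = "{p. \<xi> p \<noteq> 0} \<union> {p. \<eta> p \<noteq> 0}"
  have fU: "finite ?U" using assms by simp
  have a: "iota sM mul h k (\<lambda>p. \<xi> p + \<eta> p) g bs e' = (\<Sum>p\<in>?U. sM (\<xi> p + \<eta> p) (contr_gen mul h (fst p) (snd p) g bs e'))"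
    by (rule iota_superset[OF fU]) (use True in auto)
  have b: "iota sM mul h k \<xi> g bs e' = (\<Sum>p\<in>?U. sM (\<xi> p) (contr_gen mul h (fst p) (snd p) g bs e'))"
    by (rule iota_superset[OF fU]) (use True in auto)
  have c: "iota sM mul h k \<eta> g bs e' = (\<Sum>p\<in>?U. sM (\<eta> p) (contr_gen mul h (fst p) (snd p) g bs e'))"
    by (rule iota_superset[OF fU]) (use True in auto)
  show ?thesis unfolding a b c sM_ladd sum.distrib ..
qed (simp add: iota_bad)

lemma iota_scale:
  assumes "finite {p. \<xi> p \<noteq> 0}"
  shows "iota sM mul h k (\<lambda>p. c * \<xi> p) g bs e' = sM c (iota sM mul h k \<xi> g bs e')"
proof (cases "h \<le> k \<and> length bs = k - h \<and> length e' = k - h")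
  case True
  let ?U = "{p. \<xi> p \<noteq> 0}"
  have a: "iota sM mul h k (\<lambda>p. c * \<xi> p) g bs e' = (\<Sum>p\<in>?U. sM (c * \<xi> p) (contr_gen mul h (fst p) (snd p) g bs e'))"
    by (rule iota_superset[OF assms]) (use True in auto)
  have b: "iota sM mul h k \<xi> g bs e' = (\<Sum>p\<in>?U. sM (\<xi> p) (contr_gen mul h (fst p) (snd p) g bs e'))"
    by (rule iota_superset[OF assms]) (use True in auto)
  show ?thesis unfolding a b sM_sum sM_sM ..
qed (simp add: iota_bad)

lemma fin_delta: "finite {p. (delta x p :: 'f) \<noteq> 0}"
  by (rule finite_subset[of _ "{x}"]) (auto simp: delta_def)

lemma iota_delta:
  assumes "h \<le> k" "length bs = k - h" "length e' = k - h"
  shows "iota sM mul h k (delta x) g bs e' = contr_gen mul h (fst x) (snd x) g bs e'"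
proof -
  have "iota sM mul h k (delta x) g bs e' = (\<Sum>p\<in>{x}. sM (delta x p) (contr_gen mul h (fst p) (snd p) g bs e'))"
    by (rule iota_superset) (use assms in \<open>auto simp: delta_def\<close>)
  then show ?thesis by (simp add: delta_def sM_one)
qed

end


context ctx begin

lemma gen_add_b:
  assumes g: "cochain sA dA sM k g" and la: "length as = h" and i: "i < k - h" and hk: "h \<le> k" and lb: "length bs = k - h"
  shows "contr_gen mul h as \<phi> g (bs[i := x + y]) e' = contr_gen mul h as \<phi> g (bs[i := x]) e' + contr_gen mul h as \<phi> g (bs[i := y]) e'"
proof -
  have C: "contr_gen mul h as \<phi> g bs' e' = fsum h (\<lambda>e. mul (\<phi> e) (g (as @ bs') (e @ e')))" for bs'
    by (rule contr_C[OF coch_fin[OF g]])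
  have upd: "as @ bs[i := z] = (as @ bs)[h + i := z]" for z using la i by (simp add: list_update_append)
  have lk: "length (as @ bs) = k" "h + i < k" using la lb hk i by auto
  have fx: "fin h (\<lambda>e. mul (\<phi> e) (g ((as @ bs)[h + i := z]) (e @ e')))" for z
    by (rule fin_app[OF coch_fin[OF g, where as="(as @ bs)[h + i := z]"], where e'=e']) auto
  show ?thesis unfolding C
    unfolding upd coch_add[OF g lk] mul_add2
    using fsum_add[OF fx fx] by simp
qed

lemma gen_scale_b:
  assumes g: "cochain sA dA sM k g" and la: "length as = h" and i: "i < k - h" and hk: "h \<le> k" and lb: "length bs = k - h"
  shows "contr_gen mul h as \<phi> g (bs[i := sA c x]) e' = sM c (contr_gen mul h as \<phi> g (bs[i := x]) e')"
proof -
  have C: "contr_gen mul h as \<phi> g bs' e' = fsum h (\<lambda>e. mul (\<phi> e) (g (as @ bs') (e @ e')))" for bs'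
    by (rule contr_C[OF coch_fin[OF g]])
  have upd: "as @ bs[i := z] = (as @ bs)[h + i := z]" for z using la i by (simp add: list_update_append)
  have lk: "length (as @ bs) = k" "h + i < k" using la lb hk i by auto
  have fx: "fin h (\<lambda>e. mul (\<phi> e) (g ((as @ bs)[h + i := z]) (e @ e')))" for z
    by (rule fin_app[OF coch_fin[OF g, where as="(as @ bs)[h + i := z]"], where e'=e']) auto
  show ?thesis unfolding C
    unfolding upd coch_scale[OF g lk] mul_scale2
    using fsum_hom[OF fx addh_sM] by simp
qed

lemma gen_d_b:
  assumes g: "cochain sA dA sM k g" and la: "length as = h" and i: "i < k - h" and hk: "h \<le> k"
    and lb: "length bs = k - h" and le: "length e' = k - h"
  shows "contr_gen mul h as \<phi> g (bs[i := dA (bs ! i)]) e'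
     = - (if e' ! i = 0 then 0 else contr_gen mul h as \<phi> g bs (e'[i := e' ! i - 1]))"
proof -
  have C: "contr_gen mul h as \<phi> g bs' e'' = fsum h (\<lambda>e. mul (\<phi> e) (g (as @ bs') (e @ e'')))" for bs' e''
    by (rule contr_C[OF coch_fin[OF g]])
  have upd: "as @ bs[i := dA (bs ! i)] = (as @ bs)[h + i := dA ((as @ bs) ! (h + i))]"
    using la i by (simp add: list_update_append nth_append)
  have lk: "length (as @ bs) = k" "h + i < k" using la lb hk i by auto
  have pw: "mul (\<phi> e) (g (as @ bs[i := dA (bs ! i)]) (e @ e'))
     = - (if e' ! i = 0 then 0 else mul (\<phi> e) (g (as @ bs) (e @ e'[i := e' ! i - 1])))" if le': "length e = h" for e
  proof -
    have "length (e @ e') = k" using le' le hk by simp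
    from coch_d[OF g lk(1) this lk(2)]
    have "g (as @ bs[i := dA (bs ! i)]) (e @ e') = - (if e' ! i = 0 then 0 else g (as @ bs) (e @ e'[i := e' ! i - 1]))"
      unfolding upd using le' i by (simp add: nth_append list_update_append)
    then show ?thesis by (simp add: addh_neg[OF addh_mul2])
  qed
  have fT: "fin h (\<lambda>e. mul (\<phi> e) (g (as @ bs) (e @ e'[i := e' ! i - 1])))"
    by (rule fin_app[OF coch_fin[OF g, where as="as @ bs"], where e'="e'[i := e' ! i - 1]"]) auto
  have "contr_gen mul h as \<phi> g (bs[i := dA (bs ! i)]) e'
     = fsum h (\<lambda>e. - (if e' ! i = 0 then 0 else mul (\<phi> e) (g (as @ bs) (e @ e'[i := e' ! i - 1]))))"
    unfolding C by (rule fsum_cong) (rule pw)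
  also have "\<dots> = - (if e' ! i = 0 then 0 else contr_gen mul h as \<phi> g bs (e'[i := e' ! i - 1]))"
  proof (cases "e' ! i = 0")
    case True then show ?thesis by (simp add: fsum_zero)
  next
    case False then show ?thesis unfolding C using fsum_neg[OF fT] by simp
  qed
  finally show ?thesis .
qed

lemma shift_perm:
  fixes \<sigma> :: "nat \<Rightarrow> nat" and n h k :: nat
  assumes \<sigma>: "\<sigma> permutes {..<n}" and k: "k = h + n"
  obtains \<tau> where "\<tau> permutes {..<k}" "sign \<tau> = sign \<sigma>" "\<And>j. j < h \<Longrightarrow> \<tau> j = j"
    "\<And>j. j < n \<Longrightarrow> \<tau> (h + j) = h + \<sigma> j"
proof -
  define \<tau> where "\<tau> = map_permutation {..<n} (\<lambda>j. h + j) \<sigma>"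
  have inj: "inj_on (\<lambda>j. h + j) {..<n}" by (auto simp: inj_on_def)
  have bij: "bij_betw (\<lambda>j. h + j) {..<n} ((\<lambda>j. h + j) ` {..<n})" using inj by (simp add: bij_betw_def)
  have p1: "\<tau> permutes ((\<lambda>j. h + j) ` {..<n})" unfolding \<tau>_def by (rule map_permutation_permutes[OF bij \<sigma>])
  have "(\<lambda>j. h + j) ` {..<n} \<subseteq> {..<k}" using k by auto
  then have p: "\<tau> permutes {..<k}" using permutes_subset[OF p1] by blast
  have s: "sign \<tau> = sign \<sigma>" unfolding \<tau>_def by (rule sign_map_permutation[OF inj \<sigma>]) simp
  have a: "\<tau> j = j" if "j < h" for j
    using that unfolding \<tau>_def map_permutation_def restrict_id_def by auto
  have b: "\<tau> (h + j) = h + \<sigma> j" if "j < n" for j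
  proof -
    have "inv_into {..<n} (\<lambda>j. h + j) (h + j) = j" using inv_into_f_f[OF inj] that by simp
    then show ?thesis using that unfolding \<tau>_def map_permutation_def restrict_id_def by auto
  qed
  show ?thesis using that p s a b by blast
qed

lemma gen_perm_b:
  assumes g: "cochain sA dA sM k g" and la: "length as = h" and \<sigma>: "\<sigma> permutes {..<k - h}" and hk: "h \<le> k"
    and lb: "length bs = k - h" and le: "length e' = k - h"
  shows "contr_gen mul h as \<phi> g (map (\<lambda>j. bs ! \<sigma> j) [0..<k - h]) (map (\<lambda>j. e' ! \<sigma> j) [0..<k - h])
     = sM (of_int (sign \<sigma>)) (contr_gen mul h as \<phi> g bs e')"
proof -
  define n where "n = k - h"
  have kk: "k = h + n" using hk n_def by simp
  obtain \<tau> where \<tau>: "\<tau> permutes {..<k}" "sign \<tau> = sign \<sigma>" "\<And>j. j < h \<Longrightarrow> \<tau> j = j"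
    "\<And>j. j < n \<Longrightarrow> \<tau> (h + j) = h + \<sigma> j"
    using shift_perm[OF \<sigma>[folded n_def] kk] by blast
  have sl: "\<sigma> j < n" if "j < n" for j using permutes_in_image[OF \<sigma>[folded n_def], of j] that by simp
  have gen: "map (\<lambda>j. (xs @ ys) ! \<tau> j) [0..<k] = xs @ map (\<lambda>j. ys ! \<sigma> j) [0..<n]"
    if lx: "length xs = h" and ly: "length ys = n" for xs ys :: "'z list"
  proof (rule nth_equalityI)
    show "length (map (\<lambda>j. (xs @ ys) ! \<tau> j) [0..<k]) = length (xs @ map (\<lambda>j. ys ! \<sigma> j) [0..<n])"
      using lx kk by simp
    fix j assume "j < length (map (\<lambda>j. (xs @ ys) ! \<tau> j) [0..<k])"
    then have j: "j < k" by simp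
    show "map (\<lambda>j. (xs @ ys) ! \<tau> j) [0..<k] ! j = (xs @ map (\<lambda>j. ys ! \<sigma> j) [0..<n]) ! j"
    proof (cases "j < h")
      case True then show ?thesis using j \<tau>(3) lx by (simp add: nth_append)
    next
      case False
      define m where "m = j - h"
      have jm: "j = h + m" "m < n" using False j kk m_def by auto
      show ?thesis using \<tau>(4)[OF jm(2)] sl[OF jm(2)] lx jm j by (simp add: nth_append)
    qed
  qed
  have C: "contr_gen mul h as \<phi> g bs' e'' = fsum h (\<lambda>e. mul (\<phi> e) (g (as @ bs') (e @ e'')))" for bs' e''
    by (rule contr_C[OF coch_fin[OF g]])
  have fx: "fin h (\<lambda>e. mul (\<phi> e) (g (as @ bs) (e @ e')))"
    by (rule fin_app[OF coch_fin[OF g, where as="as @ bs"], where e'=e']) auto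
  have "contr_gen mul h as \<phi> g (map (\<lambda>j. bs ! \<sigma> j) [0..<n]) (map (\<lambda>j. e' ! \<sigma> j) [0..<n])
     = fsum h (\<lambda>e. sM (of_int (sign \<sigma>)) (mul (\<phi> e) (g (as @ bs) (e @ e'))))"
    unfolding C
  proof (rule fsum_cong)
    fix e :: "nat list" assume lf: "length e = h"
    have lae: "length (as @ bs) = k" "length (e @ e') = k" using la lb lf le hk by auto
    have "g (as @ map (\<lambda>j. bs ! \<sigma> j) [0..<n]) (e @ map (\<lambda>j. e' ! \<sigma> j) [0..<n])
       = sM (of_int (sign \<sigma>)) (g (as @ bs) (e @ e'))"
      unfolding gen[OF la lb[folded n_def], symmetric] gen[OF lf le[folded n_def], symmetric] \<tau>(2)[symmetric]
      by (rule coch_perm[OF g lae \<tau>(1)])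
    then show "mul (\<phi> e) (g (as @ map (\<lambda>j. bs ! \<sigma> j) [0..<n]) (e @ map (\<lambda>j. e' ! \<sigma> j) [0..<n]))
       = sM (of_int (sign \<sigma>)) (mul (\<phi> e) (g (as @ bs) (e @ e')))"
      by (simp add: mul_scale2)
  qed
  also have "\<dots> = sM (of_int (sign \<sigma>)) (contr_gen mul h as \<phi> g bs e')"
    unfolding C by (rule fsum_hom[OF fx addh_sM])
  finally show ?thesis unfolding n_def .
qed

end


context ctx begin

lemma sM_comm: "sM a (sM c x) = sM c (sM a x)"
  by (simp add: sM_sM mult.commute)

lemma fin_d2: "finite {p. (delta A p - delta B p :: 'f) \<noteq> 0}"
  by (rule finite_subset[of _ "{A, B}"]) (auto simp: delta_def)

lemma iota3:
  "iota sM mul h k (\<lambda>p. delta A p - delta B p - delta C p) g bs e'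
   = iota sM mul h k (delta A) g bs e' - iota sM mul h k (delta B) g bs e' - iota sM mul h k (delta C) g bs e'"
  using iota_diff[OF fin_d2[of A B] fin_delta[of C], of h k g bs e'] iota_diff[OF fin_delta[of A] fin_delta[of B], of h k g bs e']
  by simp

lemma iota2p:
  "iota sM mul h k (\<lambda>p. delta A p + delta B p) g bs e'
   = iota sM mul h k (delta A) g bs e' + iota sM mul h k (delta B) g bs e'"
  by (rule iota_add[OF fin_delta fin_delta])

lemma iota2s:
  "iota sM mul h k (\<lambda>p. delta A p - c * delta B p) g bs e'
   = iota sM mul h k (delta A) g bs e' - sM c (iota sM mul h k (delta B) g bs e')"
proof -
  have f: "finite {p. c * (delta B p :: 'f) \<noteq> 0}"
    by (rule finite_subset[of _ "{B}"]) (auto simp: delta_def)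
  show ?thesis using iota_diff[OF fin_delta[of A] f, of h k g bs e'] iota_scale[OF fin_delta[of B], of h k c g bs e']
    by simp
qed

lemma null_zero:
  assumes g: "cochain sA dA sM k g"
  shows "\<eta> \<in> chain_null sA dA sM h \<Longrightarrow> finite {p. \<eta> p \<noteq> 0} \<and> (\<forall>bs e'. iota sM mul h k \<eta> g bs e' = 0)"
proof (induction rule: chain_null.induct)
  case zero
  then show ?case by (simp add: iota_def)
next
  case (add \<xi> \<eta>)
  have "finite {p. \<xi> p + \<eta> p \<noteq> 0}"
    by (rule finite_subset[of _ "{p. \<xi> p \<noteq> 0} \<union> {p. \<eta> p \<noteq> 0}"]) (use add in auto)
  then show ?case using add by (simp add: iota_add)
next
  case (scale \<xi> c)
  have "finite {p. c * \<xi> p \<noteq> 0}"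
    by (rule finite_subset[of _ "{p. \<xi> p \<noteq> 0}"]) (use scale in auto)
  then show ?case using scale by (simp add: iota_scale)
next
  case (lin_add_a as \<phi> i x y)
  have la: "length as = h" using lin_add_a unfolding valid_gen_def by simp
  have "finite {p. (delta (as[i := x + y], \<phi>) p - delta (as[i := x], \<phi>) p - delta (as[i := y], \<phi>) p :: 'f) \<noteq> 0}"
    by (rule finite_subset[of _ "{(as[i := x + y], \<phi>), (as[i := x], \<phi>), (as[i := y], \<phi>)}"]) (auto simp: delta_def)
  moreover have "iota sM mul h k (\<lambda>p. delta (as[i := x + y], \<phi>) p - delta (as[i := x], \<phi>) p - delta (as[i := y], \<phi>) p) g bs e' = 0" for bs e'
  proof (cases "h \<le> k \<and> length bs = k - h \<and> length e' = k - h")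
    case True
    then show ?thesis unfolding iota3 using True by (simp add: iota_delta gen_add_a[OF g la lin_add_a(2)])
  qed (simp add: iota_bad)
  ultimately show ?case by blast
next
  case (lin_scale_a as \<phi> i c x)
  have la: "length as = h" using lin_scale_a unfolding valid_gen_def by simp
  have "finite {p. (delta (as[i := sA c x], \<phi>) p - c * delta (as[i := x], \<phi>) p :: 'f) \<noteq> 0}"
    by (rule finite_subset[of _ "{(as[i := sA c x], \<phi>), (as[i := x], \<phi>)}"]) (auto simp: delta_def)
  moreover have "iota sM mul h k (\<lambda>p. delta (as[i := sA c x], \<phi>) p - c * delta (as[i := x], \<phi>) p) g bs e' = 0" for bs e'
  proof (cases "h \<le> k \<and> length bs = k - h \<and> length e' = k - h")
    case True
    then show ?thesis unfolding iota2s using True by (simp add: iota_delta gen_scale_a[OF g la lin_scale_a(2)])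
  qed (simp add: iota_bad)
  ultimately show ?case by blast
next
  case (lin_add_phi as \<phi> \<psi>)
  have "finite {p. (delta (as, \<lambda>e. \<phi> e + \<psi> e) p - delta (as, \<phi>) p - delta (as, \<psi>) p :: 'f) \<noteq> 0}"
    by (rule finite_subset[of _ "{(as, \<lambda>e. \<phi> e + \<psi> e), (as, \<phi>), (as, \<psi>)}"]) (auto simp: delta_def)
  moreover have "iota sM mul h k (\<lambda>p. delta (as, \<lambda>e. \<phi> e + \<psi> e) p - delta (as, \<phi>) p - delta (as, \<psi>) p) g bs e' = 0" for bs e'
  proof (cases "h \<le> k \<and> length bs = k - h \<and> length e' = k - h")
    case True
    then show ?thesis unfolding iota3 using True by (simp add: iota_delta gen_add_phi[OF g])
  qed (simp add: iota_bad)
  ultimately show ?case by blast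
next
  case (lin_scale_phi as \<phi> c)
  have "finite {p. (delta (as, \<lambda>e. sM c (\<phi> e)) p - c * delta (as, \<phi>) p :: 'f) \<noteq> 0}"
    by (rule finite_subset[of _ "{(as, \<lambda>e. sM c (\<phi> e)), (as, \<phi>)}"]) (auto simp: delta_def)
  moreover have "iota sM mul h k (\<lambda>p. delta (as, \<lambda>e. sM c (\<phi> e)) p - c * delta (as, \<phi>) p) g bs e' = 0" for bs e'
  proof (cases "h \<le> k \<and> length bs = k - h \<and> length e' = k - h")
    case True
    then show ?thesis unfolding iota2s using True by (simp add: iota_delta gen_scale_phi[OF g])
  qed (simp add: iota_bad)
  ultimately show ?case by blast
next
  case (C1 as \<phi> i)
  have la: "length as = h" using C1 unfolding valid_gen_def by simp
  have "finite {p. (delta (as[i := dA (as ! i)], \<phi>) p + delta (as, lam_star h i \<phi>) p :: 'f) \<noteq> 0}"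
    by (rule finite_subset[of _ "{(as[i := dA (as ! i)], \<phi>), (as, lam_star h i \<phi>)}"]) (auto simp: delta_def)
  moreover have "iota sM mul h k (\<lambda>p. delta (as[i := dA (as ! i)], \<phi>) p + delta (as, lam_star h i \<phi>) p) g bs e' = 0" for bs e'
  proof (cases "h \<le> k \<and> length bs = k - h \<and> length e' = k - h")
    case True
    then show ?thesis unfolding iota2p using True by (simp add: iota_delta gen_C1[OF g la C1(2)])
  qed (simp add: iota_bad)
  ultimately show ?case by blast
next
  case (C2 as \<phi> \<sigma>)
  have la: "length as = h" using C2 unfolding valid_gen_def by simp
  have "finite {p. (delta (map (\<lambda>j. as ! \<sigma> j) [0..<h], perm_star h \<sigma> \<phi>) p - of_int (sign \<sigma>) * delta (as, \<phi>) p :: 'f) \<noteq> 0}"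
    by (rule finite_subset[of _ "{(map (\<lambda>j. as ! \<sigma> j) [0..<h], perm_star h \<sigma> \<phi>), (as, \<phi>)}"]) (auto simp: delta_def)
  moreover have "iota sM mul h k (\<lambda>p. delta (map (\<lambda>j. as ! \<sigma> j) [0..<h], perm_star h \<sigma> \<phi>) p - of_int (sign \<sigma>) * delta (as, \<phi>) p) g bs e' = 0" for bs e'
  proof (cases "h \<le> k \<and> length bs = k - h \<and> length e' = k - h")
    case True
    then show ?thesis unfolding iota2s using True by (simp add: iota_delta gen_C2[OF g la C2(2)])
  qed (simp add: iota_bad)
  ultimately show ?case by blast
qed

end


context ctx begin

lemma iota_cochain:
  fixes sA :: "'f \<Rightarrow> 'a::ab_group_add \<Rightarrow> 'a" and g :: "'a list \<Rightarrow> nat list \<Rightarrow> 'm"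
    and \<xi> :: "'a list \<times> (nat list \<Rightarrow> 'm) \<Rightarrow> 'f"
  assumes xi: "chain_rep h \<xi>" and g: "cochain sA dA sM k g" and hk: "h \<le> k"
  shows "cochain sA dA sM (k - h) (iota sM mul h k \<xi> g)"
proof -
  define S where "S = {p. \<xi> p \<noteq> 0}"
  have fS: "finite S" using xi unfolding chain_rep_def S_def by simp
  have la: "length (fst p) = h" if "p \<in> S" for p using xi that unfolding chain_rep_def S_def valid_gen_def by blast
  define Cp where "Cp = (\<lambda>p bs e'. contr_gen mul h (fst p) (snd p) g bs e')"
  have IG: "iota sM mul h k \<xi> g bs e' = (\<Sum>p\<in>S. sM (\<xi> p) (Cp p bs e'))"
    if "length bs = k - h" "length e' = k - h" for bs e'
    unfolding S_def Cp_def by (rule iota_good[OF hk that])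
  have c1: "\<forall>bs e. length bs \<noteq> k - h \<or> length e \<noteq> k - h \<longrightarrow> iota sM mul h k \<xi> g bs e = 0"
    by (auto simp: iota_bad)
  have c2: "\<forall>bs. finite {e. iota sM mul h k \<xi> g bs e \<noteq> 0}"
  proof
    fix bs :: "'a list"
    have "{e. iota sM mul h k \<xi> g bs e \<noteq> 0} \<subseteq> (\<Union>p\<in>S. drop h ` {f. g (fst p @ bs) f \<noteq> 0})"
    proof
      fix e' assume "e' \<in> {e. iota sM mul h k \<xi> g bs e \<noteq> 0}"
      then have nz: "iota sM mul h k \<xi> g bs e' \<noteq> 0" by simp
      then have lens: "length bs = k - h" "length e' = k - h" using c1 by blast+
      then have "(\<Sum>p\<in>S. sM (\<xi> p) (Cp p bs e')) \<noteq> 0" using nz IG by simp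
      then obtain p where p: "p \<in> S" "sM (\<xi> p) (Cp p bs e') \<noteq> 0"
        by (rule sum.not_neutral_contains_not_neutral)
      then have "Cp p bs e' \<noteq> 0" by auto
      then have "(\<Sum>e\<in>{e. length e = h \<and> g (fst p @ bs) (e @ e') \<noteq> 0}. mul (snd p e) (g (fst p @ bs) (e @ e'))) \<noteq> 0"
        unfolding Cp_def contr_gen_def .
      then obtain e where e: "e \<in> {e. length e = h \<and> g (fst p @ bs) (e @ e') \<noteq> 0}"
        by (rule sum.not_neutral_contains_not_neutral)
      then have "e' = drop h (e @ e')" by simp
      with e p(1) show "e' \<in> (\<Union>p\<in>S. drop h ` {f. g (fst p @ bs) f \<noteq> 0})" by blast
    qed
    moreover have "finite (\<Union>p\<in>S. drop h ` {f. g (fst p @ bs) f \<noteq> 0})"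
      using fS coch_fin[OF g] by blast
    ultimately show "finite {e. iota sM mul h k \<xi> g bs e \<noteq> 0}" by (rule finite_subset)
  qed
  have c3: "\<forall>bs i x y e. length bs = k - h \<longrightarrow> i < k - h \<longrightarrow>
        iota sM mul h k \<xi> g (bs[i := x + y]) e = iota sM mul h k \<xi> g (bs[i := x]) e + iota sM mul h k \<xi> g (bs[i := y]) e"
  proof (intro allI impI)
    fix bs :: "'a list" and i :: nat and x y :: 'a and e :: "nat list" assume lb: "length bs = k - h" and i: "i < k - h"
    show "iota sM mul h k \<xi> g (bs[i := x + y]) e = iota sM mul h k \<xi> g (bs[i := x]) e + iota sM mul h k \<xi> g (bs[i := y]) e"
    proof (cases "length e = k - h")
      case True
      have "(\<Sum>p\<in>S. sM (\<xi> p) (Cp p (bs[i := x + y]) e)) = (\<Sum>p\<in>S. sM (\<xi> p) (Cp p (bs[i := x]) e) + sM (\<xi> p) (Cp p (bs[i := y]) e))"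
        by (rule sum.cong[OF refl]) (simp add: Cp_def gen_add_b[OF g la _ hk lb] i sM_add)
      then show ?thesis using IG lb True by (simp add: sum.distrib)
    qed (simp add: iota_bad)
  qed
  have c4: "\<forall>bs i c x e. length bs = k - h \<longrightarrow> i < k - h \<longrightarrow>
        iota sM mul h k \<xi> g (bs[i := sA c x]) e = sM c (iota sM mul h k \<xi> g (bs[i := x]) e)"
  proof (intro allI impI)
    fix bs :: "'a list" and i :: nat and c :: 'f and x :: 'a and e :: "nat list" assume lb: "length bs = k - h" and i: "i < k - h"
    show "iota sM mul h k \<xi> g (bs[i := sA c x]) e = sM c (iota sM mul h k \<xi> g (bs[i := x]) e)"
    proof (cases "length e = k - h")
      case True
      have "(\<Sum>p\<in>S. sM (\<xi> p) (Cp p (bs[i := sA c x]) e)) = (\<Sum>p\<in>S. sM c (sM (\<xi> p) (Cp p (bs[i := x]) e)))"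
        by (rule sum.cong[OF refl]) (simp add: Cp_def gen_scale_b[OF g la _ hk lb] i sM_comm)
      then show ?thesis using IG lb True by (simp add: sM_sum)
    qed (simp add: iota_bad)
  qed
  have c5: "\<forall>bs i e. length bs = k - h \<longrightarrow> length e = k - h \<longrightarrow> i < k - h \<longrightarrow>
        iota sM mul h k \<xi> g (bs[i := dA (bs ! i)]) e =
          - (if e ! i = 0 then 0 else iota sM mul h k \<xi> g bs (e[i := e ! i - 1]))"
  proof (intro allI impI)
    fix bs :: "'a list" and i :: nat and e :: "nat list" assume lb: "length bs = k - h" and le: "length e = k - h" and i: "i < k - h"
    have "(\<Sum>p\<in>S. sM (\<xi> p) (Cp p (bs[i := dA (bs ! i)]) e))
        = (\<Sum>p\<in>S. - (if e ! i = 0 then 0 else sM (\<xi> p) (Cp p bs (e[i := e ! i - 1]))))"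
      by (rule sum.cong[OF refl]) (simp add: Cp_def gen_d_b[OF g la _ hk lb le] i addh_neg[OF addh_sM])
    also have "\<dots> = - (if e ! i = 0 then 0 else (\<Sum>p\<in>S. sM (\<xi> p) (Cp p bs (e[i := e ! i - 1]))))"
      by (simp add: sum_negf)
    finally show "iota sM mul h k \<xi> g (bs[i := dA (bs ! i)]) e =
          - (if e ! i = 0 then 0 else iota sM mul h k \<xi> g bs (e[i := e ! i - 1]))"
      using IG lb le by simp
  qed
  have c6: "\<forall>bs e \<sigma>. length bs = k - h \<longrightarrow> length e = k - h \<longrightarrow> \<sigma> permutes {..<k - h} \<longrightarrow>
        iota sM mul h k \<xi> g (map (\<lambda>j. bs ! \<sigma> j) [0..<k - h]) (map (\<lambda>j. e ! \<sigma> j) [0..<k - h])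
          = sM (of_int (sign \<sigma>)) (iota sM mul h k \<xi> g bs e)"
  proof (intro allI impI)
    fix bs :: "'a list" and e :: "nat list" and \<sigma> :: "nat \<Rightarrow> nat" assume lb: "length bs = k - h" and le: "length e = k - h" and \<sigma>: "\<sigma> permutes {..<k - h}"
    have "(\<Sum>p\<in>S. sM (\<xi> p) (Cp p (map (\<lambda>j. bs ! \<sigma> j) [0..<k - h]) (map (\<lambda>j. e ! \<sigma> j) [0..<k - h])))
        = (\<Sum>p\<in>S. sM (of_int (sign \<sigma>)) (sM (\<xi> p) (Cp p bs e)))"
      by (rule sum.cong[OF refl]) (simp add: Cp_def gen_perm_b[OF g la \<sigma> hk lb le] sM_comm)
    then show "iota sM mul h k \<xi> g (map (\<lambda>j. bs ! \<sigma> j) [0..<k - h]) (map (\<lambda>j. e ! \<sigma> j) [0..<k - h])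
          = sM (of_int (sign \<sigma>)) (iota sM mul h k \<xi> g bs e)"
      using IG[of bs e] IG[of "map (\<lambda>j. bs ! \<sigma> j) [0..<k - h]" "map (\<lambda>j. e ! \<sigma> j) [0..<k - h]"] lb le
      by (simp add: sM_sum)
  qed
  show ?thesis unfolding cochain_def using c1 c2 c3 c4 c5 c6 by blast
qed

end
theorem proposition3p5:
  fixes sA :: "'f::field_char_0 \<Rightarrow> 'a::ab_group_add \<Rightarrow> 'a"
    and dA :: "'a \<Rightarrow> 'a" and br :: "'a \<Rightarrow> 'a \<Rightarrow> nat \<Rightarrow> 'a"
    and sM :: "'f \<Rightarrow> 'm::ab_group_add \<Rightarrow> 'm" and dM :: "'m \<Rightarrow> 'm"
    and act :: "'a \<Rightarrow> 'm \<Rightarrow> nat \<Rightarrow> 'm" and mul :: "'m \<Rightarrow> 'm \<Rightarrow> 'm"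
    and h :: nat
  assumes "conformal_module sA dA br sM dM act"
    and "derivation_product sM dM act mul"
  shows
    "(\<forall>\<xi> k g. chain_rep h \<xi> \<longrightarrow> cochain sA dA sM k g \<longrightarrow>
        (\<lambda>bs e. dcoch dM (k - h) (iota sM mul h k \<xi> g) bs e
                 - iota sM mul h k \<xi> (dcoch dM k g) bs e)
        = iota sM mul h k (dchain dM h \<xi>) g)
     \<and>
     (\<forall>\<xi>. chain_rep h \<xi> \<longrightarrow> dchain dM h \<xi> \<in> chain_null sA dA sM h \<longrightarrow>
        (\<forall>k g. cochain sA dA sM k g \<longrightarrow>
           dcoch dM (k - h) (iota sM mul h k \<xi> g) = iota sM mul h k \<xi> (dcoch dM k g))
        \<and> (\<forall>k g. h \<le> k \<longrightarrow> cochain sA dA sM k g \<longrightarrow>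
             cochain sA dA sM (k - h) (iota sM mul h k \<xi> g))
        \<and> (\<forall>k \<beta>. h \<le> k \<longrightarrow> cochain sA dA sM k \<beta> \<longrightarrow>
             (\<exists>\<beta>'. cochain sA dA sM (k - h) \<beta>' \<and>
                iota sM mul h k \<xi> (dcoch dM k \<beta>) = dcoch dM (k - h) \<beta>')))"
proof -
  have vs: "vector_space sM" using assms(1) unfolding conformal_module_def by (elim conjE) assumption
  have lin: "Vector_Spaces.linear sM sM dM" using assms(1) unfolding conformal_module_def by (elim conjE) assumption
  have madd: "\<forall>x x' y. mul (x + x') y = mul x y + mul x' y"
    using assms(2) unfolding derivation_product_def by (elim conjE) assumption
  have mscale: "\<forall>c x y. mul (sM c x) y = sM c (mul x y)"
    using assms(2) unfolding derivation_product_def by (elim conjE) assumption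
  have mcomm: "\<forall>x y. mul x y = mul y x"
    using assms(2) unfolding derivation_product_def by (elim conjE) assumption
  have mder: "\<forall>x y. dM (mul x y) = mul (dM x) y + mul x (dM y)"
    using assms(2) unfolding derivation_product_def by (elim conjE) assumption
  interpret ctx sM dM mul
    by (rule ctx.intro[OF vs lin madd mscale mcomm mder])
  have P1: "\<forall>\<xi> k g. chain_rep h \<xi> \<longrightarrow> cochain sA dA sM k g \<longrightarrow>
        (\<lambda>bs e. dcoch dM (k - h) (iota sM mul h k \<xi> g) bs e
                 - iota sM mul h k \<xi> (dcoch dM k g) bs e)
        = iota sM mul h k (dchain dM h \<xi>) g"
  proof (intro allI impI ext)
    fix \<xi> :: "'a list \<times> (nat list \<Rightarrow> 'm) \<Rightarrow> 'f" and k :: nat and g :: "'a list \<Rightarrow> nat list \<Rightarrow> 'm"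
      and bs :: "'a list" and e :: "nat list"
    assume "chain_rep h \<xi>" "cochain sA dA sM k g"
    then show "dcoch dM (k - h) (iota sM mul h k \<xi> g) bs e - iota sM mul h k \<xi> (dcoch dM k g) bs e
        = iota sM mul h k (dchain dM h \<xi>) g bs e" by (rule part1)
  qed
  have P2: "\<forall>\<xi>. chain_rep h \<xi> \<longrightarrow> dchain dM h \<xi> \<in> chain_null sA dA sM h \<longrightarrow>
        (\<forall>k g. cochain sA dA sM k g \<longrightarrow>
           dcoch dM (k - h) (iota sM mul h k \<xi> g) = iota sM mul h k \<xi> (dcoch dM k g))
        \<and> (\<forall>k g. h \<le> k \<longrightarrow> cochain sA dA sM k g \<longrightarrow>
             cochain sA dA sM (k - h) (iota sM mul h k \<xi> g))
        \<and> (\<forall>k \<beta>. h \<le> k \<longrightarrow> cochain sA dA sM k \<beta> \<longrightarrow>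
             (\<exists>\<beta>'. cochain sA dA sM (k - h) \<beta>' \<and>
                iota sM mul h k \<xi> (dcoch dM k \<beta>) = dcoch dM (k - h) \<beta>'))"
  proof (intro allI impI)
    fix \<xi> :: "'a list \<times> (nat list \<Rightarrow> 'm) \<Rightarrow> 'f" assume xi: "chain_rep h \<xi>" and dn: "dchain dM h \<xi> \<in> chain_null sA dA sM h"
    have A: "dcoch dM (k - h) (iota sM mul h k \<xi> g) = iota sM mul h k \<xi> (dcoch dM k g)"
      if g: "cochain sA dA sM k g" for k and g :: "'a list \<Rightarrow> nat list \<Rightarrow> 'm" 
    proof (intro ext)
      fix bs :: "'a list" and e :: "nat list"
      have "dcoch dM (k - h) (iota sM mul h k \<xi> g) bs e - iota sM mul h k \<xi> (dcoch dM k g) bs e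
        = iota sM mul h k (dchain dM h \<xi>) g bs e" by (rule part1[OF xi g])
      also have "\<dots> = 0" using null_zero[OF g dn] by blast
      finally show "dcoch dM (k - h) (iota sM mul h k \<xi> g) bs e = iota sM mul h k \<xi> (dcoch dM k g) bs e"
        by simp
    qed
    have B: "cochain sA dA sM (k - h) (iota sM mul h k \<xi> g)"
      if "h \<le> k" "cochain sA dA sM k g" for k and g :: "'a list \<Rightarrow> nat list \<Rightarrow> 'm" 
      by (rule iota_cochain[OF xi that(2) that(1)])
    show "(\<forall>k g. cochain sA dA sM k g \<longrightarrow>
           dcoch dM (k - h) (iota sM mul h k \<xi> g) = iota sM mul h k \<xi> (dcoch dM k g))
        \<and> (\<forall>k g. h \<le> k \<longrightarrow> cochain sA dA sM k g \<longrightarrow>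
             cochain sA dA sM (k - h) (iota sM mul h k \<xi> g))
        \<and> (\<forall>k \<beta>. h \<le> k \<longrightarrow> cochain sA dA sM k \<beta> \<longrightarrow>
             (\<exists>\<beta>'. cochain sA dA sM (k - h) \<beta>' \<and>
                iota sM mul h k \<xi> (dcoch dM k \<beta>) = dcoch dM (k - h) \<beta>'))"
      using A B by metis
  qed
  show ?thesis using P1 P2 by blast
qed

end
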